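(* For $n\ge1$, let $\sigma=(\sigma_1,\dots,\sigma_n)$ be a random element of $\{-1,1\}^n$ with distribution $$P(\sigma)=Z^{-1}\exp\Big(\frac1n\sum_{1\le i<j\le n}\sigma_i\sigma_j\Big),$$ $Z$ the normalizing constant (the Curie-Weiss model at temperature $T=1$). Construct $\sigma'$ as follows: choose an index $I$ uniformly at random from $\{1,\dots,n\}$, independently of $\sigma$, let $\sigma'_j=\sigma_j$ for $j\ne I$, and draw $\sigma'_I$ from the conditional distribution of $\sigma_I$ given $(\sigma_j)_{j\ne I}$ (one step of Glauber dynamics). Let $W=n^{-3/4}\sum_{i=1}^n\sigma_i$ and $W'=n^{-3/4}\sum_{i=1}^n\sigma'_i$. Then $$E\Big|E(W-W'\mid W)-\frac{n^{-3/2}}{3}W^3\Big|\le 15n^{-2},\qquad E\big|E((W-W')^2\mid W)-2n^{-3/2}\big|\le 15n^{-2},$$ $$E|W|^3\le 15,$$ and $|W-W'|\le 2n^{-3/4}$. *)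

theory Defs
  imports "HOL-Library.FuncSet" Complex_Main
begin

definition spins :: "nat \<Rightarrow> (nat \<Rightarrow> real) set" where
  "spins n = PiE {..<n} (\<lambda>_. {-1, 1})"

definition cw_energy :: "nat \<Rightarrow> (nat \<Rightarrow> real) \<Rightarrow> real" where
  "cw_energy n \<sigma> = (1 / real n) * (\<Sum>i<n. \<Sum>j\<in>{i<..<n}. \<sigma> i * \<sigma> j)"

definition cw_Z :: "nat \<Rightarrow> real" where
  "cw_Z n = (\<Sum>\<sigma>\<in>spins n. exp (cw_energy n \<sigma>))"

definition cw_prob :: "nat \<Rightarrow> (nat \<Rightarrow> real) \<Rightarrow> real" where
  "cw_prob n \<sigma> = exp (cw_energy n \<sigma>) / cw_Z n"

definition cw_cond :: "nat \<Rightarrow> (nat \<Rightarrow> real) \<Rightarrow> nat \<Rightarrow> real \<Rightarrow> real" where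
  "cw_cond n \<sigma> i s = cw_prob n (\<sigma>(i := s)) /
      (cw_prob n (\<sigma>(i := 1)) + cw_prob n (\<sigma>(i := -1)))"

text \<open>Sample space: (sigma, I, new value of spin I); sigma' = sigma(I := s).\<close>
definition omega :: "nat \<Rightarrow> ((nat \<Rightarrow> real) \<times> nat \<times> real) set" where
  "omega n = spins n \<times> {..<n} \<times> {-1, 1}"

definition pr :: "nat \<Rightarrow> (nat \<Rightarrow> real) \<times> nat \<times> real \<Rightarrow> real" where
  "pr n \<omega> = (case \<omega> of (\<sigma>, i, s) \<Rightarrow> cw_prob n \<sigma> * (1 / real n) * cw_cond n \<sigma> i s)"

definition sigma' :: "(nat \<Rightarrow> real) \<times> nat \<times> real \<Rightarrow> nat \<Rightarrow> real" where
  "sigma' \<omega> = (case \<omega> of (\<sigma>, i, s) \<Rightarrow> \<sigma>(i := s))"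

definition Wfun :: "nat \<Rightarrow> (nat \<Rightarrow> real) \<Rightarrow> real" where
  "Wfun n \<sigma> = (\<Sum>i<n. \<sigma> i) / real n powr (3/4)"

definition W :: "nat \<Rightarrow> (nat \<Rightarrow> real) \<times> nat \<times> real \<Rightarrow> real" where
  "W n \<omega> = Wfun n (fst \<omega>)"

definition W' :: "nat \<Rightarrow> (nat \<Rightarrow> real) \<times> nat \<times> real \<Rightarrow> real" where
  "W' n \<omega> = Wfun n (sigma' \<omega>)"

definition Ex :: "nat \<Rightarrow> ((nat \<Rightarrow> real) \<times> nat \<times> real \<Rightarrow> real) \<Rightarrow> real" where
  "Ex n f = (\<Sum>\<omega>\<in>omega n. pr n \<omega> * f \<omega>)"

definition condE_W :: "nat \<Rightarrow> ((nat \<Rightarrow> real) \<times> nat \<times> real \<Rightarrow> real)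
    \<Rightarrow> (nat \<Rightarrow> real) \<times> nat \<times> real \<Rightarrow> real" where
  "condE_W n f \<omega> =
     (\<Sum>\<eta>\<in>{\<eta>\<in>omega n. W n \<eta> = W n \<omega>}. pr n \<eta> * f \<eta>) /
     (\<Sum>\<eta>\<in>{\<eta>\<in>omega n. W n \<eta> = W n \<omega>}. pr n \<eta>)"

end

theory Submission
  imports Defs
begin

lemma DERIV_tanh_real: "((\<lambda>x::real. tanh x) has_real_derivative 1 - tanh x ^ 2) (at x)"
  by (auto intro!: derivative_eq_intros)

lemma tanh_lip_mono:
  fixes a b :: real assumes "a \<le> b"
  shows "tanh b - tanh a \<le> b - a"
proof -
  have "(\<lambda>x. x - tanh x) a \<le> (\<lambda>x. x - tanh x) b"
  proof (rule DERIV_nonneg_imp_nondecreasing[OF assms])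
    fix x show "\<exists>y. ((\<lambda>x. x - tanh x) has_real_derivative y) (at x) \<and> y \<ge> 0"
      by (rule exI[of _ "1 - (1 - tanh x ^ 2)"]) (auto intro!: derivative_eq_intros DERIV_tanh_real)
  qed
  then show ?thesis by simp
qed

lemma tanh_lip: "\<bar>tanh (a::real) - tanh b\<bar> \<le> \<bar>a - b\<bar>"
proof (cases "a \<le> b")
  case True
  then show ?thesis using tanh_lip_mono[OF True] by (simp add: abs_if)
next
  case False
  then show ?thesis using tanh_lip_mono[of b a] by (simp add: abs_if)
qed

lemma tanh_le_self: "x \<ge> 0 \<Longrightarrow> tanh (x::real) \<le> x"
  using tanh_lip_mono[of 0 x] by simp

lemma tanh_abs_le: "\<bar>tanh (x::real)\<bar> \<le> \<bar>x\<bar>"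
  using tanh_lip[of x 0] by simp

lemma tanh_lower3: assumes "x \<ge> 0" shows "x - x^3/3 \<le> tanh (x::real)"
proof -
  have "(\<lambda>x. tanh x - x + x^3/3) 0 \<le> (\<lambda>x. tanh x - x + x^3/3) x"
  proof (rule DERIV_nonneg_imp_nondecreasing[OF assms])
    fix y :: real assume y: "0 \<le> y" "y \<le> x"
    have "tanh y ^ 2 \<le> y ^ 2"
      using tanh_le_self[of y] y by (intro power_mono) auto
    then show "\<exists>d. ((\<lambda>x. tanh x - x + x^3/3) has_real_derivative d) (at y) \<and> d \<ge> 0"
      by (intro exI[of _ "1 - tanh y ^ 2 - 1 + 3 * y^2 / 3"]) (auto intro!: derivative_eq_intros DERIV_tanh_real)
  qed
  then show ?thesis by simp
qed

lemma tanh_upper5: assumes "x \<ge> 0" "x \<le> 1" shows "tanh (x::real) \<le> x - x^3/3 + 2*x^5/15"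
proof -
  have "(\<lambda>x. x - x^3/3 + 2*x^5/15 - tanh x) 0 \<le> (\<lambda>x. x - x^3/3 + 2*x^5/15 - tanh x) x"
  proof (rule DERIV_nonneg_imp_nondecreasing[OF assms(1)])
    fix y :: real assume y: "0 \<le> y" "y \<le> x"
    have y1: "y^2 \<le> 1" using y assms by (simp add: power_le_one)
    have p: "0 \<le> y - y^3/3"
    proof -
      have "y^3 = y * y^2" by (simp add: power2_eq_square power3_eq_cube)
      also have "\<dots> \<le> y * 1" using y1 y by (intro mult_left_mono) auto
      finally show ?thesis using y(1) by linarith
    qed
    have "(y - y^3/3)^2 \<le> tanh y ^ 2"
      using tanh_lower3[of y] y p by (intro power_mono) auto
    moreover have "(y - y^3/3)^2 - y^2 + 2*y^4/3 \<ge> 0"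
    proof -
      have eq: "(y - y^3/3)^2 - y^2 + 2*y^4/3 = y^6/9" by (simp add: algebra_simps power2_eq_square power3_eq_cube power4_eq_xxxx) (simp add: eval_nat_numeral)
      have "y^6/9 \<ge> 0" using y(1) by simp
      then show ?thesis using eq by linarith
    qed
    ultimately have "1 - 3*y^2/3 + 2*(5*y^4)/15 - (1 - tanh y ^ 2) \<ge> 0" by simp
    then show "\<exists>d. ((\<lambda>x. x - x^3/3 + 2*x^5/15 - tanh x) has_real_derivative d) (at y) \<and> d \<ge> 0"
      by (intro exI[of _ "1 - 3*y^2/3 + 2*(5*y^4)/15 - (1 - tanh y ^ 2)"]) (auto intro!: derivative_eq_intros DERIV_tanh_real)
  qed
  then show ?thesis by simp
qed

lemma tanh_tangent_aux:
  fixes x y :: real assumes "x < y"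
  shows "\<bar>tanh y - tanh x - (y-x)*(1 - tanh x^2)\<bar> \<le> 2*(y-x)^2 \<and>
         \<bar>tanh x - tanh y - (x-y)*(1 - tanh y^2)\<bar> \<le> 2*(y-x)^2"
proof
  define g where "g z = tanh z - tanh x - (z - x)*(1 - tanh x^2)" for z
  have dg: "DERIV g z :> (1 - tanh z^2) - (1 - tanh x^2)" for z
    unfolding g_def by (auto intro!: derivative_eq_intros DERIV_tanh_real)
  obtain z where z: "x < z" "z < y" "g y - g x = (y - x) * ((1 - tanh z^2) - (1 - tanh x^2))"
    using MVT2[OF assms, of g "\<lambda>z. (1 - tanh z^2) - (1 - tanh x^2)"] dg by blast
  have "\<bar>(1 - tanh z^2) - (1 - tanh x^2)\<bar> = \<bar>tanh x - tanh z\<bar> * \<bar>tanh x + tanh z\<bar>"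
    by (simp add: power2_eq_square abs_mult[symmetric] algebra_simps)
  also have "\<dots> \<le> \<bar>x - z\<bar> * 2"
    using tanh_lip[of x z] tanh_real_bounds[of x] tanh_real_bounds[of z]
    by (intro mult_mono) auto
  also have "\<dots> \<le> (y - x) * 2" using z by simp
  finally have b: "\<bar>(1 - tanh z^2) - (1 - tanh x^2)\<bar> \<le> (y-x)*2" .
  have "\<bar>g y\<bar> = (y-x) * \<bar>(1 - tanh z^2) - (1 - tanh x^2)\<bar>"
    using z assms by (simp add: g_def abs_mult)
  also have "\<dots> \<le> (y-x)*((y-x)*2)" using b assms by (intro mult_left_mono) auto
  finally show "\<bar>tanh y - tanh x - (y-x)*(1 - tanh x^2)\<bar> \<le> 2*(y-x)^2"
    by (simp add: g_def power2_eq_square algebra_simps)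
next
  define g where "g z = tanh z - tanh y - (z - y)*(1 - tanh y^2)" for z
  have dg: "DERIV g z :> (1 - tanh z^2) - (1 - tanh y^2)" for z
    unfolding g_def by (auto intro!: derivative_eq_intros DERIV_tanh_real)
  obtain z where z: "x < z" "z < y" "g y - g x = (y - x) * ((1 - tanh z^2) - (1 - tanh y^2))"
    using MVT2[OF assms, of g "\<lambda>z. (1 - tanh z^2) - (1 - tanh y^2)"] dg by blast
  have "\<bar>(1 - tanh z^2) - (1 - tanh y^2)\<bar> = \<bar>tanh y - tanh z\<bar> * \<bar>tanh y + tanh z\<bar>"
    by (simp add: power2_eq_square abs_mult[symmetric] algebra_simps)
  also have "\<dots> \<le> \<bar>y - z\<bar> * 2"
    using tanh_lip[of y z] tanh_real_bounds[of y] tanh_real_bounds[of z]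
    by (intro mult_mono) auto
  also have "\<dots> \<le> (y - x) * 2" using z by simp
  finally have b: "\<bar>(1 - tanh z^2) - (1 - tanh y^2)\<bar> \<le> (y-x)*2" .
  have "\<bar>g x\<bar> = \<bar>g y - g x\<bar>" by (simp add: g_def)
  also have "\<dots> = (y-x) * \<bar>(1 - tanh z^2) - (1 - tanh y^2)\<bar>"
    using z assms by (simp add: abs_mult)
  finally have "\<bar>g x\<bar> = (y-x) * \<bar>(1 - tanh z^2) - (1 - tanh y^2)\<bar>" .
  also have "\<dots> \<le> (y-x)*((y-x)*2)" using b assms by (intro mult_left_mono) auto
  finally show "\<bar>tanh x - tanh y - (x-y)*(1 - tanh y^2)\<bar> \<le> 2*(y-x)^2"
    by (simp add: g_def power2_eq_square algebra_simps)
qed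

lemma tanh_tangent:
  fixes x y :: real
  shows "\<bar>tanh y - tanh x - (y-x)*(1 - tanh x^2)\<bar> \<le> 2*(y-x)^2"
proof -
  consider "x < y" | "x = y" | "y < x" by linarith
  then show ?thesis
  proof cases
    case 1 then show ?thesis using tanh_tangent_aux by blast
  next
    case 2 then show ?thesis by simp
  next
    case 3 then show ?thesis using tanh_tangent_aux[OF 3] by (simp add: power2_commute)
  qed
qed

lemma cubic_err_nonneg:
  fixes x :: real assumes "0 \<le> x" "x \<le> 1"
  shows "\<bar>x - tanh x - x^3/3\<bar> \<le> 2/15 * x^5"
  using tanh_lower3[of x] tanh_upper5[of x] assms by (simp add: abs_le_iff)

lemma cubic_err:
  fixes m :: real assumes "\<bar>m\<bar> \<le> 1"
  shows "\<bar>m - tanh m - m^3/3\<bar> \<le> 2/15 * \<bar>m\<bar>^5"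
proof (cases "m \<ge> 0")
  case True then show ?thesis using cubic_err_nonneg[of m] assms by simp
next
  case False
  have "\<bar>(-m) - tanh (-m) - (-m)^3/3\<bar> \<le> 2/15 * (-m)^5"
    using cubic_err_nonneg[of "-m"] assms False by simp
  moreover have "\<bar>(-m) - tanh (-m) - (-m)^3/3\<bar> = \<bar>m - tanh m - m^3/3\<bar>"
    by (simp add: abs_minus_commute)
  moreover have "(-m)^5 = \<bar>m\<bar>^5" using False by simp
  ultimately show ?thesis by simp
qed

lemma quartic_lower_nonneg:
  fixes x :: real assumes "0 \<le> x" "x \<le> 1"
  shows "x^4/5 \<le> x * (x - tanh x)"
proof -
  have "x^3/3 - 2*x^5/15 \<le> x - tanh x" using tanh_upper5[OF assms] by simp
  hence "x * (x^3/3 - 2*x^5/15) \<le> x * (x - tanh x)" using assms by (intro mult_left_mono) auto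
  moreover have "x^4/5 \<le> x * (x^3/3 - 2*x^5/15)"
  proof -
    have "x^2 \<le> 1" using assms by (simp add: power_le_one)
    hence "x^4 * x^2 \<le> x^4 * 1" by (intro mult_left_mono) auto
    thus ?thesis by (simp add: algebra_simps eval_nat_numeral)
  qed
  ultimately show ?thesis by linarith
qed

lemma quartic_lower:
  fixes m :: real assumes "\<bar>m\<bar> \<le> 1"
  shows "m^4/5 \<le> m * (m - tanh m)"
proof (cases "m \<ge> 0")
  case True then show ?thesis using quartic_lower_nonneg[of m] assms by simp
next
  case False
  have "(-m)^4/5 \<le> (-m) * ((-m) - tanh (-m))" using quartic_lower_nonneg[of "-m"] assms False by simp
  then show ?thesis by (simp add: algebra_simps)
qed

lemma tanh_scale_le:
  fixes m t :: real assumes "0 \<le> t" "t \<le> 1"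
  shows "m * tanh (t*m) \<le> m * tanh m"
proof (cases "m \<ge> 0")
  case True
  have "t*m \<le> m" using assms True by (simp add: mult_left_le_one_le)
  then show ?thesis using True by (intro mult_left_mono) auto
next
  case False
  have "m \<le> t*m" using assms False by (simp add: mult_le_cancel_right2)
  then have "tanh m \<le> tanh (t*m)" by simp
  then show ?thesis using False by (intro mult_left_mono_neg) auto
qed

lemma T_approx:
  fixes m e :: real assumes m: "\<bar>m\<bar> \<le> 1" and e: "e \<ge> 0"
  shows "\<bar>(1+m)/2 * tanh (m-e) + (1-m)/2 * tanh (m+e) - tanh ((1-e)*m)\<bar> \<le> 2*e^2*(1-m^2)"
proof -
  define mu where "mu = (1-e)*m"
  define d where "d = 1 - tanh mu ^ 2"
  define R1 where "R1 = tanh (m-e) - tanh mu - ((m-e) - mu)*d"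
  define R2 where "R2 = tanh (m+e) - tanh mu - ((m+e) - mu)*d"
  have h1: "(m-e) - mu = -(e*(1-m))" by (simp add: mu_def algebra_simps)
  have h2: "(m+e) - mu = e*(1+m)" by (simp add: mu_def algebra_simps)
  have "\<bar>R1\<bar> \<le> 2*((m-e)-mu)^2" using tanh_tangent[of "m-e" mu] unfolding R1_def d_def by simp
  then have r1: "\<bar>R1\<bar> \<le> 2*(e*(1-m))^2" using h1 by simp
  have "\<bar>R2\<bar> \<le> 2*((m+e)-mu)^2" using tanh_tangent[of "m+e" mu] unfolding R2_def d_def by simp
  then have r2: "\<bar>R2\<bar> \<le> 2*(e*(1+m))^2" using h2 by simp
  have eq: "(1+m)/2 * tanh (m-e) + (1-m)/2 * tanh (m+e) - tanh mu = (1+m)/2 * R1 + (1-m)/2 * R2"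
    unfolding R1_def R2_def mu_def by (simp add: field_simps)
  have p1: "0 \<le> (1+m)/2" "0 \<le> (1-m)/2" using m by auto
  have "\<bar>(1+m)/2 * R1 + (1-m)/2 * R2\<bar> \<le> (1+m)/2 * \<bar>R1\<bar> + (1-m)/2 * \<bar>R2\<bar>"
    using p1 by (simp add: abs_mult abs_triangle_ineq order_trans[OF abs_triangle_ineq])
  also have "\<dots> \<le> (1+m)/2 * (2*(e*(1-m))^2) + (1-m)/2 * (2*(e*(1+m))^2)"
    using p1 r1 r2 by (intro add_mono mult_left_mono) auto
  also have "\<dots> = 2*e^2*(1-m^2)" by (simp add: field_simps power2_eq_square)
  finally show ?thesis using eq mu_def by simp
qed

lemma U_bounds:
  fixes m e :: real assumes m: "\<bar>m\<bar> \<le> 1" and e: "e \<ge> 0"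
  shows "\<bar>(1+m)/2 * tanh (m-e) - (1-m)/2 * tanh (m+e) - m * tanh m\<bar> \<le> e"
proof -
  have eq: "(1+m)/2 * tanh (m-e) - (1-m)/2 * tanh (m+e) - m * tanh m =
     (1+m)/2 * (tanh (m-e) - tanh m) - (1-m)/2 * (tanh (m+e) - tanh m)"
    by (simp add: field_simps)
  have a: "\<bar>tanh (m-e) - tanh m\<bar> \<le> e" "\<bar>tanh (m+e) - tanh m\<bar> \<le> e"
    using tanh_lip[of "m-e" m] tanh_lip[of "m+e" m] e by auto
  have p1: "0 \<le> (1+m)/2" "0 \<le> (1-m)/2" using m by auto
  have "\<bar>(1+m)/2 * (tanh (m-e) - tanh m) - (1-m)/2 * (tanh (m+e) - tanh m)\<bar>
        \<le> (1+m)/2 * \<bar>tanh (m-e) - tanh m\<bar> + (1-m)/2 * \<bar>tanh (m+e) - tanh m\<bar>"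
    using p1 by (simp add: abs_mult order_trans[OF abs_triangle_ineq4])
  also have "\<dots> \<le> (1+m)/2 * e + (1-m)/2 * e" using a p1 by (intro add_mono mult_left_mono) auto
  also have "\<dots> = e" by (simp add: field_simps)
  finally show ?thesis using eq by simp
qed

definition Ssum :: "nat \<Rightarrow> (nat \<Rightarrow> real) \<Rightarrow> real" where
  "Ssum n \<sigma> = (\<Sum>i<n. \<sigma> i)"

lemma finite_spins: "finite (spins n)"
  unfolding spins_def by (intro finite_PiE) auto

lemma spins_val: "\<sigma> \<in> spins n \<Longrightarrow> i < n \<Longrightarrow> \<sigma> i = -1 \<or> \<sigma> i = 1"
  unfolding spins_def by (auto simp: PiE_iff)

lemma spins_sq: "\<sigma> \<in> spins n \<Longrightarrow> i < n \<Longrightarrow> \<sigma> i ^ 2 = 1"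
  using spins_val[of \<sigma> n i] by auto

lemma spins_upd: "\<sigma> \<in> spins n \<Longrightarrow> i < n \<Longrightarrow> s \<in> {-1,1} \<Longrightarrow> \<sigma>(i := s) \<in> spins n"
  unfolding spins_def by (auto simp: PiE_iff extensional_def)

lemma spins_flip: "\<sigma> \<in> spins n \<Longrightarrow> i < n \<Longrightarrow> \<sigma>(i := - \<sigma> i) \<in> spins n"
  using spins_upd[of \<sigma> n i "- \<sigma> i"] spins_val[of \<sigma> n i] by auto

lemma spins_nonempty: "spins n \<noteq> {}"
  unfolding spins_def by (simp add: PiE_eq_empty_iff)

lemma pair_sum:
  fixes f :: "nat \<Rightarrow> real"
  shows "2 * (\<Sum>i<n. \<Sum>j\<in>{i<..<n}. f i * f j) = (\<Sum>i<n. f i)^2 - (\<Sum>i<n. f i ^ 2)"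
proof (induction n)
  case 0 then show ?case by simp
next
  case (Suc n)
  have "{n<..<Suc n} = {}" by auto
  have "(\<Sum>i<Suc n. \<Sum>j\<in>{i<..<Suc n}. f i * f j) = (\<Sum>i<n. \<Sum>j\<in>{i<..<Suc n}. f i * f j)"
    using \<open>{n<..<Suc n} = {}\<close> by simp
  also have "\<dots> = (\<Sum>i<n. (\<Sum>j\<in>{i<..<n}. f i * f j) + f i * f n)"
  proof (rule sum.cong[OF refl])
    fix i assume "i \<in> {..<n}"
    then have "{i<..<Suc n} = insert n {i<..<n}" by auto
    then show "(\<Sum>j\<in>{i<..<Suc n}. f i * f j) = (\<Sum>j\<in>{i<..<n}. f i * f j) + f i * f n" by simp
  qed
  also have "\<dots> = (\<Sum>i<n. \<Sum>j\<in>{i<..<n}. f i * f j) + f n * (\<Sum>i<n. f i)"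
    by (simp add: sum.distrib sum_distrib_left mult.commute)
  finally show ?case using Suc by (simp add: algebra_simps power2_eq_square)
qed

lemma energy_closed:
  assumes "\<sigma> \<in> spins n"
  shows "cw_energy n \<sigma> = ((Ssum n \<sigma>)^2 - real n) / (2 * real n)"
proof -
  have "(\<Sum>i<n. \<sigma> i ^ 2) = (\<Sum>i<n. 1::real)"
    using spins_sq[OF assms] by (intro sum.cong) auto
  then have "2 * (\<Sum>i<n. \<Sum>j\<in>{i<..<n}. \<sigma> i * \<sigma> j) = (Ssum n \<sigma>)^2 - real n"
    using pair_sum[of \<sigma> n] by (simp add: Ssum_def)
  then have X: "(\<Sum>i<n. \<Sum>j\<in>{i<..<n}. \<sigma> i * \<sigma> j) = ((Ssum n \<sigma>)^2 - real n) / 2" by simp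
  show ?thesis unfolding cw_energy_def X by simp
qed

lemma Ssum_upd:
  assumes "i < n"
  shows "Ssum n (\<sigma>(i := s)) = Ssum n \<sigma> - \<sigma> i + s"
proof -
  have fin: "finite {..<n}" by simp
  have "Ssum n (\<sigma>(i := s)) = s + (\<Sum>j\<in>{..<n}-{i}. (\<sigma>(i := s)) j)"
    unfolding Ssum_def using sum.remove[OF fin, of i "\<sigma>(i := s)"] assms by simp
  also have "(\<Sum>j\<in>{..<n}-{i}. (\<sigma>(i := s)) j) = (\<Sum>j\<in>{..<n}-{i}. \<sigma> j)"
    by (intro sum.cong) auto
  also have "\<dots> = Ssum n \<sigma> - \<sigma> i"
    unfolding Ssum_def using sum.remove[OF fin, of i \<sigma>] assms by simp
  finally show ?thesis by linarith
qed

lemma cw_Z_pos: "cw_Z n > 0"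
  unfolding cw_Z_def using finite_spins spins_nonempty
  by (intro sum_pos) auto

lemma cw_prob_pos: "cw_prob n \<sigma> > 0"
  unfolding cw_prob_def using cw_Z_pos by simp

lemma cw_prob_sum: "(\<Sum>\<sigma>\<in>spins n. cw_prob n \<sigma>) = 1"
  unfolding cw_prob_def using cw_Z_pos[of n] by (simp add: sum_divide_distrib[symmetric] cw_Z_def)

lemma cw_cond_sum: "cw_cond n \<sigma> i 1 + cw_cond n \<sigma> i (-1) = 1"
  unfolding cw_cond_def using cw_prob_pos[of n "\<sigma>(i := 1)"] cw_prob_pos[of n "\<sigma>(i := -1)"]
  by (simp add: add_divide_distrib[symmetric])

lemma cw_cond_pos: "cw_cond n \<sigma> i s > 0"
  unfolding cw_cond_def using cw_prob_pos
  by (simp add: add_pos_pos)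

lemma cond_closed:
  assumes "\<sigma> \<in> spins n" "i < n" "s \<in> {-1,1}" "n \<ge> 1"
  shows "cw_cond n \<sigma> i s = (1 + s * tanh ((Ssum n \<sigma> - \<sigma> i) / real n)) / 2"
proof -
  define S where "S = Ssum n \<sigma>"
  define h where "h = (S - \<sigma> i) / real n"
  define K where "K = ((S - \<sigma> i)^2 + 1 - real n) / (2 * real n)"
  have en: "cw_energy n (\<sigma>(i := t)) = K + t * h" if "t \<in> {-1,1}" for t
  proof -
    have "cw_energy n (\<sigma>(i := t)) = ((S - \<sigma> i + t)^2 - real n) / (2 * real n)"
      using energy_closed[OF spins_upd[OF assms(1,2) that]] Ssum_upd[OF assms(2)] S_def by simp
    also have "\<dots> = K + t * h"
      using that assms(4) unfolding K_def h_def by (auto simp: field_simps power2_eq_square)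
    finally show ?thesis .
  qed
  have pr: "cw_prob n (\<sigma>(i := t)) = exp K * exp (t * h) / cw_Z n" if "t \<in> {-1,1}" for t
    unfolding cw_prob_def using en[OF that] by (simp add: exp_add)
  have gen: "\<And>E Z a b c :: real. E > 0 \<Longrightarrow> Z > 0 \<Longrightarrow> b > 0 \<Longrightarrow> c > 0 \<Longrightarrow>
      (E * a / Z) / (E * b / Z + E * c / Z) = a / (b + c)"
  proof -
    fix E Z a b c :: real assume p: "E > 0" "Z > 0" "b > 0" "c > 0"
    have "(E * a / Z) / (E * b / Z + E * c / Z) = ((E/Z) * a) / ((E/Z) * (b + c))"
      by (simp add: algebra_simps add_divide_distrib)
    also have "\<dots> = a / (b + c)" using p by simp
    finally show "(E * a / Z) / (E * b / Z + E * c / Z) = a / (b + c)" .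
  qed
  have "cw_cond n \<sigma> i s = exp (s * h) / (exp (1*h) + exp ((-1) * h))"
    unfolding cw_cond_def pr[OF assms(3)] pr[of 1, simplified] pr[of "-1", simplified]
    using gen[of "exp K" "cw_Z n" "exp h" "exp (-h)" "exp (s*h)"] cw_Z_pos[of n] by simp
  also have "\<dots> = exp (s * h) / (exp h + exp (- h))" by simp
  also have "\<dots> = (1 + s * tanh h) / 2"
  proof -
    define u where "u = exp h"
    have u: "u > 0" unfolding u_def by simp
    have D: "u + inverse u \<noteq> 0" using u by (simp add: add_pos_pos less_imp_neq[symmetric])
    have uu0: "1 + u*u \<noteq> 0" using u by (simp add: add_pos_nonneg less_imp_neq[symmetric])
    have uu20: "u + u*(u*u) \<noteq> 0" using u by (simp add: add_pos_pos less_imp_neq[symmetric])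
    have e1: "u / (u + inverse u) = (1 + (u - inverse u)/(u + inverse u))/2"
      using D uu0 uu20 u by (simp add: field_simps)
    have uu: "1 + u*u \<noteq> 0" using u by (simp add: add_pos_nonneg less_imp_neq[symmetric])
    have uu2: "u + u*(u*u) \<noteq> 0" using u by (simp add: add_pos_pos less_imp_neq[symmetric])
    have e2: "inverse u / (u + inverse u) = (1 - (u - inverse u)/(u + inverse u))/2"
      using D uu uu2 u by (simp add: field_simps)
    have t: "tanh h = (u - inverse u)/(u + inverse u)" by (simp add: tanh_altdef u_def exp_minus)
    have em: "exp (-h) = inverse u" by (simp add: u_def exp_minus)
    from assms(3) have "s = -1 \<or> s = 1" by auto
    then show ?thesis
    proof
      assume s: "s = -1"
      have "exp (s * h) / (exp h + exp (- h)) = inverse u / (u + inverse u)" using s em u_def by simp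
      also have "\<dots> = (1 + s * tanh h) / 2" unfolding e2 t s by (simp add: minus_divide_left)
      finally show ?thesis .
    next
      assume s: "s = 1"
      have "exp (s * h) / (exp h + exp (- h)) = u / (u + inverse u)" using s em u_def by simp
      also have "\<dots> = (1 + s * tanh h) / 2" unfolding e1 t s by simp
      finally show ?thesis .
    qed
  qed
  finally show ?thesis unfolding h_def S_def .
qed

lemma sum_spin:
  assumes "\<sigma> \<in> spins n"
  shows "(\<Sum>i<n. g (\<sigma> i)) = (real n + Ssum n \<sigma>)/2 * g 1 + (real n - Ssum n \<sigma>)/2 * g (-1)"
proof -
  have "(\<Sum>i<n. g (\<sigma> i)) = (\<Sum>i<n. (g 1 + g (-1))/2 + \<sigma> i * ((g 1 - g (-1))/2))"
  proof (rule sum.cong[OF refl])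
    fix i assume "i \<in> {..<n}"
    then have "\<sigma> i = -1 \<or> \<sigma> i = 1" using spins_val[OF assms] by auto
    then show "g (\<sigma> i) = (g 1 + g (-1))/2 + \<sigma> i * ((g 1 - g (-1))/2)"
      by (auto simp: field_simps)
  qed
  also have "\<dots> = real n * ((g 1 + g (-1))/2) + Ssum n \<sigma> * ((g 1 - g (-1))/2)"
    by (simp add: sum.distrib Ssum_def sum_distrib_right)
  also have "\<dots> = (real n + Ssum n \<sigma>)/2 * g 1 + (real n - Ssum n \<sigma>)/2 * g (-1)"
    by (simp add: field_simps)
  finally show ?thesis .
qed

lemma sum_s:
  assumes "\<sigma> \<in> spins n" "i < n" "n \<ge> 1"
  shows "(\<Sum>s\<in>{-1,1::real}. cw_cond n \<sigma> i s * F s) =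
     (1 - tanh ((Ssum n \<sigma> - \<sigma> i) / real n))/2 * F (-1) + (1 + tanh ((Ssum n \<sigma> - \<sigma> i) / real n))/2 * F 1"
proof -
  have c1: "cw_cond n \<sigma> i 1 = (1 + tanh ((Ssum n \<sigma> - \<sigma> i) / real n))/2"
    using cond_closed[OF assms(1,2) _ assms(3), of 1] by simp
  have c2: "cw_cond n \<sigma> i (-1) = (1 - tanh ((Ssum n \<sigma> - \<sigma> i) / real n))/2"
    using cond_closed[OF assms(1,2) _ assms(3), of "-1"] by simp
  show ?thesis by (simp add: c1 c2)
qed

definition Epi :: "nat \<Rightarrow> ((nat \<Rightarrow> real) \<Rightarrow> real) \<Rightarrow> real" where
  "Epi n g = (\<Sum>\<sigma>\<in>spins n. cw_prob n \<sigma> * g \<sigma>)"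

lemma Epi_mono: "(\<And>\<sigma>. \<sigma> \<in> spins n \<Longrightarrow> f \<sigma> \<le> g \<sigma>) \<Longrightarrow> Epi n f \<le> Epi n g"
  unfolding Epi_def using cw_prob_pos by (intro sum_mono mult_left_mono) (auto intro: less_imp_le)

lemma Epi_add: "Epi n (\<lambda>\<sigma>. f \<sigma> + g \<sigma>) = Epi n f + Epi n g"
  unfolding Epi_def by (simp add: sum.distrib distrib_left)

lemma Epi_diff: "Epi n (\<lambda>\<sigma>. f \<sigma> - g \<sigma>) = Epi n f - Epi n g"
  unfolding Epi_def by (simp add: sum_subtractf right_diff_distrib)

lemma Epi_cmult: "Epi n (\<lambda>\<sigma>. c * f \<sigma>) = c * Epi n f"
  unfolding Epi_def by (simp add: sum_distrib_left algebra_simps)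

lemma Epi_const: "Epi n (\<lambda>\<sigma>. c) = c"
  unfolding Epi_def using cw_prob_sum[of n] by (simp add: sum_distrib_right[symmetric])

lemma Epi_cong: "(\<And>\<sigma>. \<sigma> \<in> spins n \<Longrightarrow> f \<sigma> = g \<sigma>) \<Longrightarrow> Epi n f = Epi n g"
  unfolding Epi_def by (intro sum.cong) auto

lemma sum_prod_reduce:
  "(\<Sum>\<eta>\<in>B \<times> ({..<n} \<times> {-1,1}). pr n \<eta> * f \<eta>) =
   (\<Sum>\<sigma>\<in>B. cw_prob n \<sigma> * ((1 / real n) * (\<Sum>i<n. \<Sum>s\<in>{-1,1}. cw_cond n \<sigma> i s * f (\<sigma>, i, s))))"
proof -
  have "(\<Sum>\<eta>\<in>B \<times> ({..<n} \<times> {-1,1}). pr n \<eta> * f \<eta>) =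
        (\<Sum>\<sigma>\<in>B. \<Sum>\<eta>\<in>{..<n} \<times> {-1,1}. pr n (\<sigma>, \<eta>) * f (\<sigma>, \<eta>))"
    unfolding sum.cartesian_product by (simp add: split_def)
  also have "\<dots> = (\<Sum>\<sigma>\<in>B. \<Sum>i<n. \<Sum>s\<in>{-1,1}. pr n (\<sigma>, i, s) * f (\<sigma>, i, s))"
    unfolding sum.cartesian_product by (simp add: split_def)
  also have "\<dots> = (\<Sum>\<sigma>\<in>B. cw_prob n \<sigma> * ((1 / real n) * (\<Sum>i<n. \<Sum>s\<in>{-1,1}. cw_cond n \<sigma> i s * f (\<sigma>, i, s))))"
    by (simp add: pr_def sum_distrib_left algebra_simps)
  finally show ?thesis .
qed

lemma Ex_reduce:
  "Ex n f = Epi n (\<lambda>\<sigma>. (1 / real n) * (\<Sum>i<n. \<Sum>s\<in>{-1,1}. cw_cond n \<sigma> i s * f (\<sigma>, i, s)))"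
  unfolding Ex_def omega_def Epi_def by (rule sum_prod_reduce)

lemma Ex_fst:
  assumes "n \<ge> 1"
  shows "Ex n (\<lambda>\<omega>. g (fst \<omega>)) = Epi n g"
proof -
  have "(1 / real n) * (\<Sum>i<n. \<Sum>s\<in>{-1,1}. cw_cond n \<sigma> i s * g \<sigma>) = g \<sigma>" for \<sigma>
  proof -
    have "(\<Sum>i<n. \<Sum>s\<in>{-1,1::real}. cw_cond n \<sigma> i s * g \<sigma>) = (\<Sum>i<n. g \<sigma>)"
    proof (rule sum.cong[OF refl])
      fix i
      have "(\<Sum>s\<in>{-1,1::real}. cw_cond n \<sigma> i s * g \<sigma>) = (cw_cond n \<sigma> i 1 + cw_cond n \<sigma> i (-1)) * g \<sigma>"
        by (simp add: algebra_simps)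
      then show "(\<Sum>s\<in>{-1,1::real}. cw_cond n \<sigma> i s * g \<sigma>) = g \<sigma>" using cw_cond_sum[of n \<sigma> i] by simp
    qed
    then show ?thesis using assms by simp
  qed
  then show ?thesis unfolding Ex_reduce by simp
qed

lemma stationary_i:
  assumes "i < n"
  shows "(\<Sum>\<sigma>\<in>spins n. cw_prob n \<sigma> * cw_cond n \<sigma> i (- \<sigma> i) * (g (\<sigma>(i := - \<sigma> i)) - g \<sigma>)) = 0"
proof -
  define fl where "fl \<sigma> = \<sigma>(i := - \<sigma> i)" for \<sigma> :: "nat \<Rightarrow> real"
  have db: "cw_prob n (fl \<sigma>) * cw_cond n (fl \<sigma>) i (- fl \<sigma> i) = cw_prob n \<sigma> * cw_cond n \<sigma> i (- \<sigma> i)" for \<sigma>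
    unfolding cw_cond_def fl_def by (simp add: algebra_simps)
  have ff: "fl (fl \<sigma>) = \<sigma>" for \<sigma> unfolding fl_def by simp
  have fs: "fl \<sigma> \<in> spins n" if "\<sigma> \<in> spins n" for \<sigma> unfolding fl_def using spins_flip[OF that assms] .
  have "(\<Sum>\<sigma>\<in>spins n. cw_prob n \<sigma> * cw_cond n \<sigma> i (- \<sigma> i) * g (fl \<sigma>)) =
        (\<Sum>\<tau>\<in>spins n. cw_prob n \<tau> * cw_cond n \<tau> i (- \<tau> i) * g \<tau>)"
    by (rule sum.reindex_bij_witness[of _ fl fl]) (auto simp: ff fs db)
  then show ?thesis
    by (simp add: right_diff_distrib sum_subtractf fl_def)
qed

lemma stationary:
  "(\<Sum>\<sigma>\<in>spins n. cw_prob n \<sigma> * (\<Sum>i<n. cw_cond n \<sigma> i (- \<sigma> i) * (g (\<sigma>(i := - \<sigma> i)) - g \<sigma>))) = 0"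
proof -
  have "(\<Sum>\<sigma>\<in>spins n. cw_prob n \<sigma> * (\<Sum>i<n. cw_cond n \<sigma> i (- \<sigma> i) * (g (\<sigma>(i := - \<sigma> i)) - g \<sigma>)))
     = (\<Sum>i<n. \<Sum>\<sigma>\<in>spins n. cw_prob n \<sigma> * cw_cond n \<sigma> i (- \<sigma> i) * (g (\<sigma>(i := - \<sigma> i)) - g \<sigma>))"
    by (simp add: sum_distrib_left sum.swap[of _ "spins n"] mult.assoc)
  also have "\<dots> = 0" using stationary_i by simp
  finally show ?thesis .
qed

lemma condE_jensen:
  fixes p f :: "'a \<Rightarrow> real" and K :: "'a \<Rightarrow> 'b"
  assumes fin: "finite \<Omega>" and p: "\<And>\<omega>. \<omega> \<in> \<Omega> \<Longrightarrow> p \<omega> \<ge> 0"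
  shows "(\<Sum>\<omega>\<in>\<Omega>. p \<omega> * \<bar>(\<Sum>\<eta>\<in>{\<eta>\<in>\<Omega>. K \<eta> = K \<omega>}. p \<eta> * f \<eta>) / (\<Sum>\<eta>\<in>{\<eta>\<in>\<Omega>. K \<eta> = K \<omega>}. p \<eta>)\<bar>)
         \<le> (\<Sum>\<omega>\<in>\<Omega>. p \<omega> * \<bar>f \<omega>\<bar>)"
proof -
  define D where "D \<omega> = (\<Sum>\<eta>\<in>{\<eta>\<in>\<Omega>. K \<eta> = K \<omega>}. p \<eta>)" for \<omega>
  define X where "X \<eta> = p \<eta> * \<bar>f \<eta>\<bar>" for \<eta>
  have finc: "finite {\<eta>\<in>\<Omega>. K \<eta> = K \<omega>}" for \<omega> using fin by simp
  have Dnn: "D \<omega> \<ge> 0" for \<omega> unfolding D_def using p by (intro sum_nonneg) auto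
  have pD: "p \<omega> \<le> D \<omega>" if "\<omega> \<in> \<Omega>" for \<omega>
    unfolding D_def using that p by (intro member_le_sum finc) auto
  have Dcl: "D \<eta> = D \<omega>" if "K \<eta> = K \<omega>" for \<eta> \<omega> unfolding D_def using that by simp
  have step1: "p \<omega> * \<bar>(\<Sum>\<eta>\<in>{\<eta>\<in>\<Omega>. K \<eta> = K \<omega>}. p \<eta> * f \<eta>) / D \<omega>\<bar>
      \<le> (\<Sum>\<eta>\<in>\<Omega>. if K \<eta> = K \<omega> then p \<omega> * X \<eta> / D \<eta> else 0)" if "\<omega> \<in> \<Omega>" for \<omega>
  proof -
    have "\<bar>(\<Sum>\<eta>\<in>{\<eta>\<in>\<Omega>. K \<eta> = K \<omega>}. p \<eta> * f \<eta>)\<bar> \<le> (\<Sum>\<eta>\<in>{\<eta>\<in>\<Omega>. K \<eta> = K \<omega>}. X \<eta>)"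
      unfolding X_def by (rule order_trans[OF sum_abs]) (use p in \<open>auto simp: abs_mult intro!: sum_mono\<close>)
    then have "\<bar>(\<Sum>\<eta>\<in>{\<eta>\<in>\<Omega>. K \<eta> = K \<omega>}. p \<eta> * f \<eta>) / D \<omega>\<bar> \<le> (\<Sum>\<eta>\<in>{\<eta>\<in>\<Omega>. K \<eta> = K \<omega>}. X \<eta>) / D \<omega>"
      using Dnn[of \<omega>] by (simp only: abs_divide abs_of_nonneg) (rule divide_right_mono)
    then have "p \<omega> * \<bar>(\<Sum>\<eta>\<in>{\<eta>\<in>\<Omega>. K \<eta> = K \<omega>}. p \<eta> * f \<eta>) / D \<omega>\<bar> \<le> p \<omega> * ((\<Sum>\<eta>\<in>{\<eta>\<in>\<Omega>. K \<eta> = K \<omega>}. X \<eta>) / D \<omega>)"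
      using p[OF that] by (intro mult_left_mono) auto
    also have "\<dots> = (\<Sum>\<eta>\<in>{\<eta>\<in>\<Omega>. K \<eta> = K \<omega>}. p \<omega> * X \<eta> / D \<omega>)"
      by (simp only: sum_divide_distrib sum_distrib_left times_divide_eq_right)
    also have "\<dots> = (\<Sum>\<eta>\<in>{\<eta>\<in>\<Omega>. K \<eta> = K \<omega>}. p \<omega> * X \<eta> / D \<eta>)"
    proof (rule sum.cong[OF refl])
      fix \<eta> assume "\<eta> \<in> {\<eta>\<in>\<Omega>. K \<eta> = K \<omega>}"
      then have "D \<eta> = D \<omega>" using Dcl[of \<eta> \<omega>] by simp
      then show "p \<omega> * X \<eta> / D \<omega> = p \<omega> * X \<eta> / D \<eta>" by simp
    qed
    also have "\<dots> = (\<Sum>\<eta>\<in>\<Omega>. if K \<eta> = K \<omega> then p \<omega> * X \<eta> / D \<eta> else 0)"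
      using fin by (simp add: sum.inter_filter)
    finally show ?thesis .
  qed
  have "(\<Sum>\<omega>\<in>\<Omega>. p \<omega> * \<bar>(\<Sum>\<eta>\<in>{\<eta>\<in>\<Omega>. K \<eta> = K \<omega>}. p \<eta> * f \<eta>) / D \<omega>\<bar>)
     \<le> (\<Sum>\<omega>\<in>\<Omega>. \<Sum>\<eta>\<in>\<Omega>. if K \<eta> = K \<omega> then p \<omega> * X \<eta> / D \<eta> else 0)"
    using step1 by (intro sum_mono) auto
  also have "\<dots> = (\<Sum>\<eta>\<in>\<Omega>. \<Sum>\<omega>\<in>\<Omega>. if K \<eta> = K \<omega> then p \<omega> * X \<eta> / D \<eta> else 0)"
    by (rule sum.swap)
  also have "\<dots> = (\<Sum>\<eta>\<in>\<Omega>. X \<eta>)"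
  proof (rule sum.cong[OF refl])
    fix \<eta> assume e: "\<eta> \<in> \<Omega>"
    have "(\<Sum>\<omega>\<in>\<Omega>. if K \<eta> = K \<omega> then p \<omega> * X \<eta> / D \<eta> else 0) = (\<Sum>\<omega>\<in>{\<omega>\<in>\<Omega>. K \<omega> = K \<eta>}. p \<omega> * X \<eta> / D \<eta>)"
    proof -
      have "{\<omega>\<in>\<Omega>. K \<omega> = K \<eta>} = {\<omega>\<in>\<Omega>. K \<eta> = K \<omega>}" by auto
      then show ?thesis using fin by (simp add: sum.inter_filter)
    qed
    also have "\<dots> = D \<eta> * X \<eta> / D \<eta>"
      unfolding D_def by (simp add: sum_distrib_right sum_divide_distrib)
    also have "\<dots> = X \<eta>"
    proof (cases "D \<eta> = 0")
      case True
      then have "p \<eta> = 0" using pD[OF e] p[OF e] by simp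
      then show ?thesis using True by (simp add: X_def)
    next
      case False then show ?thesis by simp
    qed
    finally show "(\<Sum>\<omega>\<in>\<Omega>. if K \<eta> = K \<omega> then p \<omega> * X \<eta> / D \<eta> else 0) = X \<eta>" .
  qed
  finally show ?thesis unfolding D_def X_def .
qed

lemma alg1: fixes x t P :: real shows "P \<noteq> 0 \<Longrightarrow> x = -1 \<or> x = 1 \<Longrightarrow> (1 - t)/2 * ((x - (-1))/P) + (1 + t)/2 * ((x - 1)/P) = (x - t)/P"
  by (elim disjE) (simp_all add: field_simps)
lemma alg2: fixes x t P :: real shows "P \<noteq> 0 \<Longrightarrow> x = -1 \<or> x = 1 \<Longrightarrow> (1 - t)/2 * ((x - (-1))/P)^2 + (1 + t)/2 * ((x - 1)/P)^2 = 2 * (1 - x * t) / P^2"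
  by (elim disjE) (simp_all add: field_simps power2_eq_square)
lemma alg3: fixes n S a b m P :: real shows "n \<noteq> 0 \<Longrightarrow> P \<noteq> 0 \<Longrightarrow> S = n * m \<Longrightarrow>
  1/n * ((n + S)/2 * ((1 - a)/P) + (n - S)/2 * ((-1 - b)/P)) = (m - ((1+m)/2 * a + (1-m)/2 * b)) / P"
  by (simp add: field_simps)
lemma alg4: fixes n S a b m P :: real shows "n \<noteq> 0 \<Longrightarrow> P \<noteq> 0 \<Longrightarrow> S = n * m \<Longrightarrow>
  1/n * ((n + S)/2 * (2 * (1 - a) / P^2) + (n - S)/2 * (2 * (1 + b) / P^2)) = 2 * (1 - ((1+m)/2 * a - (1-m)/2 * b)) / P^2"
  by (simp add: field_simps)

definition mg :: "nat \<Rightarrow> (nat \<Rightarrow> real) \<Rightarrow> real" where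
  "mg n \<sigma> = Ssum n \<sigma> / real n"
definition Tg :: "nat \<Rightarrow> (nat \<Rightarrow> real) \<Rightarrow> real" where
  "Tg n \<sigma> = (1 + mg n \<sigma>)/2 * tanh (mg n \<sigma> - 1/real n) + (1 - mg n \<sigma>)/2 * tanh (mg n \<sigma> + 1/real n)"
definition Ug :: "nat \<Rightarrow> (nat \<Rightarrow> real) \<Rightarrow> real" where
  "Ug n \<sigma> = (1 + mg n \<sigma>)/2 * tanh (mg n \<sigma> - 1/real n) - (1 - mg n \<sigma>)/2 * tanh (mg n \<sigma> + 1/real n)"

lemma Ssum_abs: "\<sigma> \<in> spins n \<Longrightarrow> \<bar>Ssum n \<sigma>\<bar> \<le> real n"
proof -
  assume s: "\<sigma> \<in> spins n"
  have "\<bar>Ssum n \<sigma>\<bar> \<le> (\<Sum>i<n. \<bar>\<sigma> i\<bar>)" unfolding Ssum_def by (rule sum_abs)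
  also have "\<dots> = (\<Sum>i<n. 1)"
  proof (rule sum.cong[OF refl])
    fix i assume "i \<in> {..<n}"
    then have "\<sigma> i = -1 \<or> \<sigma> i = 1" using spins_val[OF s] by auto
    then show "\<bar>\<sigma> i\<bar> = 1" by auto
  qed
  finally show ?thesis by simp
qed

lemma mg_abs: "\<sigma> \<in> spins n \<Longrightarrow> n \<ge> 1 \<Longrightarrow> \<bar>mg n \<sigma>\<bar> \<le> 1"
proof -
  assume s: "\<sigma> \<in> spins n" and n: "n \<ge> 1"
  have "\<bar>mg n \<sigma>\<bar> = \<bar>Ssum n \<sigma>\<bar> / real n" by (simp add: mg_def abs_divide)
  also have "\<dots> \<le> real n / real n" using Ssum_abs[OF s] by (rule divide_right_mono) simp
  also have "\<dots> = 1" using n by simp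
  finally show ?thesis .
qed

lemma tanh_args:
  assumes "n \<ge> 1"
  shows "tanh ((Ssum n \<sigma> - 1) / real n) = tanh (mg n \<sigma> - 1/real n)"
    and "tanh ((Ssum n \<sigma> - (-1)) / real n) = tanh (mg n \<sigma> + 1/real n)"
  by (simp_all add: mg_def diff_divide_distrib add_divide_distrib)

lemma Wfun_Ssum: "Wfun n \<sigma> = Ssum n \<sigma> / real n powr (3/4)"
  by (simp add: Wfun_def Ssum_def)

lemma avg_const:
  assumes "n \<ge> 1"
  shows "(1 / real n) * (\<Sum>i<n. \<Sum>s\<in>{-1,1::real}. cw_cond n \<sigma> i s * c) = c"
proof -
  have "(\<Sum>i<n. \<Sum>s\<in>{-1,1::real}. cw_cond n \<sigma> i s * c) = (\<Sum>i<n. c)"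
  proof (rule sum.cong[OF refl])
    fix i
    have "(\<Sum>s\<in>{-1,1::real}. cw_cond n \<sigma> i s * c) = (cw_cond n \<sigma> i 1 + cw_cond n \<sigma> i (-1)) * c"
      by (simp add: algebra_simps)
    then show "(\<Sum>s\<in>{-1,1::real}. cw_cond n \<sigma> i s * c) = c" using cw_cond_sum[of n \<sigma> i] by simp
  qed
  then show ?thesis using assms by simp
qed

lemma A1_closed:
  assumes s: "\<sigma> \<in> spins n" and n: "n \<ge> 1"
  shows "(1 / real n) * (\<Sum>i<n. \<Sum>s\<in>{-1,1}. cw_cond n \<sigma> i s * (W n (\<sigma>, i, s) - W' n (\<sigma>, i, s)))
       = (mg n \<sigma> - Tg n \<sigma>) / real n powr (3/4)"
proof -
  define P where "P = real n powr (3/4)"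
  define S where "S = Ssum n \<sigma>"
  have Pnz: "P \<noteq> 0" unfolding P_def using n by simp
  have nnz: "real n \<noteq> 0" using n by simp
  have "(\<Sum>i<n. \<Sum>s\<in>{-1,1}. cw_cond n \<sigma> i s * (W n (\<sigma>, i, s) - W' n (\<sigma>, i, s)))
      = (\<Sum>i<n. (\<lambda>x. (x - tanh ((S - x) / real n)) / P) (\<sigma> i))"
  proof (rule sum.cong[OF refl])
    fix i assume i: "i \<in> {..<n}"
    have wd: "W n (\<sigma>, i, s) - W' n (\<sigma>, i, s) = (\<sigma> i - s) / P" for s
    proof -
      have "W n (\<sigma>, i, s) - W' n (\<sigma>, i, s) = Ssum n \<sigma> / P - Ssum n (\<sigma>(i:=s)) / P"
        by (simp add: W_def W'_def sigma'_def Wfun_Ssum P_def)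
      also have "\<dots> = (\<sigma> i - s) / P" using i Ssum_upd[of i n \<sigma> s]
        by (simp add: diff_divide_distrib[symmetric])
      finally show ?thesis .
    qed
    have v: "\<sigma> i = -1 \<or> \<sigma> i = 1" using spins_val[OF s] i by auto
    have i': "i < n" using i by simp
    show "(\<Sum>s\<in>{-1,1}. cw_cond n \<sigma> i s * (W n (\<sigma>, i, s) - W' n (\<sigma>, i, s))) =
          (\<lambda>x. (x - tanh ((S - x) / real n)) / P) (\<sigma> i)"
      unfolding wd sum_s[OF s i' n] using alg1[OF Pnz v, of "tanh ((Ssum n \<sigma> - \<sigma> i) / real n)"] by (simp add: S_def)
  qed
  also have "\<dots> = (real n + S)/2 * ((1 - tanh ((S - 1)/real n))/P) + (real n - S)/2 * ((-1 - tanh ((S - (-1))/real n))/P)"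
    using sum_spin[OF s, of "\<lambda>x. (x - tanh ((S - x) / real n)) / P"] by (simp add: S_def)
  finally have e: "(\<Sum>i<n. \<Sum>s\<in>{-1,1}. cw_cond n \<sigma> i s * (W n (\<sigma>, i, s) - W' n (\<sigma>, i, s))) =
     (real n + S)/2 * ((1 - tanh (mg n \<sigma> - 1/real n))/P) + (real n - S)/2 * ((-1 - tanh (mg n \<sigma> + 1/real n))/P)"
    using tanh_args[OF n, of \<sigma>] by (simp add: S_def)
  have mS: "S = real n * mg n \<sigma>" using n by (simp add: mg_def S_def)
  show ?thesis unfolding e P_def[symmetric] Tg_def by (rule alg3[OF nnz Pnz mS])
qed

lemma A2_closed:
  assumes s: "\<sigma> \<in> spins n" and n: "n \<ge> 1"
  shows "(1 / real n) * (\<Sum>i<n. \<Sum>s\<in>{-1,1}. cw_cond n \<sigma> i s * (W n (\<sigma>, i, s) - W' n (\<sigma>, i, s))^2)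
       = 2 * (1 - Ug n \<sigma>) / (real n powr (3/4))^2"
proof -
  define P where "P = real n powr (3/4)"
  define S where "S = Ssum n \<sigma>"
  have Pnz: "P \<noteq> 0" unfolding P_def using n by simp
  have nnz: "real n \<noteq> 0" using n by simp
  have "(\<Sum>i<n. \<Sum>s\<in>{-1,1}. cw_cond n \<sigma> i s * (W n (\<sigma>, i, s) - W' n (\<sigma>, i, s))^2)
      = (\<Sum>i<n. (\<lambda>x. 2 * (1 - x * tanh ((S - x) / real n)) / P^2) (\<sigma> i))"
  proof (rule sum.cong[OF refl])
    fix i assume i: "i \<in> {..<n}"
    have wd: "W n (\<sigma>, i, s) - W' n (\<sigma>, i, s) = (\<sigma> i - s) / P" for s
    proof -
      have "W n (\<sigma>, i, s) - W' n (\<sigma>, i, s) = Ssum n \<sigma> / P - Ssum n (\<sigma>(i:=s)) / P"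
        by (simp add: W_def W'_def sigma'_def Wfun_Ssum P_def)
      also have "\<dots> = (\<sigma> i - s) / P" using i Ssum_upd[of i n \<sigma> s]
        by (simp add: diff_divide_distrib[symmetric])
      finally show ?thesis .
    qed
    have v: "\<sigma> i = -1 \<or> \<sigma> i = 1" using spins_val[OF s] i by auto
    have i': "i < n" using i by simp
    show "(\<Sum>s\<in>{-1,1}. cw_cond n \<sigma> i s * (W n (\<sigma>, i, s) - W' n (\<sigma>, i, s))^2) =
          (\<lambda>x. 2 * (1 - x * tanh ((S - x) / real n)) / P^2) (\<sigma> i)"
      unfolding wd sum_s[OF s i' n] using alg2[OF Pnz v, of "tanh ((Ssum n \<sigma> - \<sigma> i) / real n)"] by (simp add: S_def)
  qed
  also have "\<dots> = (real n + S)/2 * (2 * (1 - tanh ((S - 1)/real n)) / P^2) + (real n - S)/2 * (2 * (1 + tanh ((S - (-1))/real n)) / P^2)"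
    using sum_spin[OF s, of "\<lambda>x. 2 * (1 - x * tanh ((S - x) / real n)) / P^2"] by (simp add: S_def)
  finally have e: "(\<Sum>i<n. \<Sum>s\<in>{-1,1}. cw_cond n \<sigma> i s * (W n (\<sigma>, i, s) - W' n (\<sigma>, i, s))^2) =
     (real n + S)/2 * (2 * (1 - tanh (mg n \<sigma> - 1/real n)) / P^2) + (real n - S)/2 * (2 * (1 + tanh (mg n \<sigma> + 1/real n)) / P^2)"
    using tanh_args[OF n, of \<sigma>] by (simp add: S_def)
  have mS: "S = real n * mg n \<sigma>" using n by (simp add: mg_def S_def)
  show ?thesis unfolding e P_def[symmetric] Ug_def by (rule alg4[OF nnz Pnz mS])
qed

lemma P1:
  fixes m e :: real assumes m: "\<bar>m\<bar> \<le> 1" and e: "0 \<le> e" "e \<le> 1"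
  shows "m^4/5 - 2*e^2 \<le> m * (m - ((1+m)/2 * tanh (m-e) + (1-m)/2 * tanh (m+e)))"
proof -
  define T where "T = (1+m)/2 * tanh (m-e) + (1-m)/2 * tanh (m+e)"
  define mu where "mu = (1-e)*m"
  have ta: "\<bar>T - tanh mu\<bar> \<le> 2*e^2*(1-m^2)" unfolding T_def mu_def using T_approx[OF m e(1)] .
  have "2*e^2*(1-m^2) \<le> 2*e^2" by (simp add: mult_left_le)
  then have ta2: "\<bar>T - tanh mu\<bar> \<le> 2*e^2" using ta by linarith
  have "\<bar>m * (tanh mu - T)\<bar> \<le> 1 * (2*e^2)"
    unfolding abs_mult using m ta2 by (intro mult_mono) (auto simp: abs_minus_commute)
  then have l1: "m * (tanh mu - T) \<ge> - 2*e^2" by (simp add: abs_le_iff)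
  have l2: "m * tanh mu \<le> m * tanh m" unfolding mu_def using tanh_scale_le[of "1-e" m] e by simp
  have l3: "m^4/5 \<le> m * (m - tanh m)" using quartic_lower[OF m] .
  have "m * (m - T) = m * (m - tanh m) + (m * tanh m - m * tanh mu) + m * (tanh mu - T)"
    by (simp add: algebra_simps)
  then show ?thesis unfolding T_def[symmetric] using l1 l2 l3 by linarith
qed

lemma P2:
  fixes m e :: real assumes m: "\<bar>m\<bar> \<le> 1" and e: "0 \<le> e"
  shows "-e \<le> (1+m)/2 * tanh (m-e) - (1-m)/2 * tanh (m+e)"
    and "(1+m)/2 * tanh (m-e) - (1-m)/2 * tanh (m+e) \<le> 1"
    and "\<bar>(1+m)/2 * tanh (m-e) - (1-m)/2 * tanh (m+e)\<bar> \<le> m^2 + e"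
proof -
  define U where "U = (1+m)/2 * tanh (m-e) - (1-m)/2 * tanh (m+e)"
  have ub: "\<bar>U - m * tanh m\<bar> \<le> e" unfolding U_def using U_bounds[OF m e] .
  have mt: "0 \<le> m * tanh m"
    by (cases "m \<ge> 0") (auto intro: mult_nonneg_nonneg mult_nonpos_nonpos)
  have mt2: "m * tanh m \<le> m^2"
  proof -
    have "m * tanh m \<le> \<bar>m\<bar> * \<bar>tanh m\<bar>" by (simp add: abs_mult[symmetric])
    also have "\<dots> \<le> \<bar>m\<bar> * \<bar>m\<bar>" using tanh_abs_le[of m] by (intro mult_left_mono) auto
    finally show ?thesis by (simp add: power2_eq_square)
  qed
  show "-e \<le> (1+m)/2 * tanh (m-e) - (1-m)/2 * tanh (m+e)" using ub mt unfolding U_def by (simp add: abs_le_iff)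
  show "\<bar>(1+m)/2 * tanh (m-e) - (1-m)/2 * tanh (m+e)\<bar> \<le> m^2 + e" using ub mt mt2 unfolding U_def
    by (simp add: abs_le_iff)
  have p1: "0 \<le> (1+m)/2" "0 \<le> (1-m)/2" using m by auto
  have "(1+m)/2 * tanh (m-e) \<le> (1+m)/2 * 1"
    using p1 tanh_real_lt_1[of "m-e"] by (intro mult_left_mono) auto
  moreover have "(1-m)/2 * (-1) \<le> (1-m)/2 * tanh (m+e)"
    using p1 tanh_real_gt_neg1[of "m+e"] by (intro mult_left_mono) auto
  ultimately show "(1+m)/2 * tanh (m-e) - (1-m)/2 * tanh (m+e) \<le> 1" by (simp add: field_simps)
qed

lemma P3:
  fixes m e :: real assumes m: "\<bar>m\<bar> \<le> 1" and e: "0 \<le> e" "e \<le> 1"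
  shows "\<bar>m - ((1+m)/2 * tanh (m-e) + (1-m)/2 * tanh (m+e)) - m^3/3\<bar>
          \<le> 2/15 * \<bar>m\<bar>^5 + e * \<bar>m\<bar> + e * \<bar>m\<bar>^3 + 2*e^2"
proof -
  define T where "T = (1+m)/2 * tanh (m-e) + (1-m)/2 * tanh (m+e)"
  define mu where "mu = (1-e)*m"
  have ta: "\<bar>T - tanh mu\<bar> \<le> 2*e^2*(1-m^2)" unfolding T_def mu_def using T_approx[OF m e(1)] .
  have "2*e^2*(1-m^2) \<le> 2*e^2" by (simp add: mult_left_le)
  then have ta2: "\<bar>T - tanh mu\<bar> \<le> 2*e^2" using ta by linarith
  have amu: "\<bar>mu\<bar> \<le> \<bar>m\<bar>" unfolding mu_def using e by (simp add: abs_mult mult_left_le_one_le)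
  have amu1: "\<bar>mu\<bar> \<le> 1" using amu m by linarith
  have c1: "\<bar>mu - tanh mu - mu^3/3\<bar> \<le> 2/15 * \<bar>m\<bar>^5"
  proof -
    have "\<bar>mu\<bar>^5 \<le> \<bar>m\<bar>^5" using amu by (intro power_mono) auto
    then show ?thesis using cubic_err[OF amu1] by linarith
  qed
  have c2: "\<bar>m - mu\<bar> = e * \<bar>m\<bar>" unfolding mu_def using e by (simp add: algebra_simps abs_mult)
  have c3: "\<bar>mu^3 - m^3\<bar>/3 \<le> e * \<bar>m\<bar>^3"
  proof -
    have mu3: "mu^3 = (1-e)^3 * m^3" unfolding mu_def by (rule power_mult_distrib)
    have "mu^3 - m^3 = - (m^3 * (1 - (1-e)^3))" unfolding mu3 by (simp add: algebra_simps)
    then have "\<bar>mu^3 - m^3\<bar> = \<bar>m\<bar>^3 * (1 - (1-e)^3)"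
    proof -
      have "(1-e)^3 \<le> 1" using e by (simp add: power_le_one)
      then show ?thesis using \<open>mu^3 - m^3 = _\<close> by (simp add: abs_mult power_abs)
    qed
    moreover have "1 - (1-e)^3 \<le> 3*e"
    proof -
      have "1 - (1-e)^3 = 3*e - 3*e^2 + e^3" by (simp add: power3_eq_cube power2_eq_square algebra_simps)
      moreover have "e^3 \<le> 3*e^2"
      proof -
        have "e^3 = e * e^2" by (simp add: power3_eq_cube power2_eq_square)
        also have "\<dots> \<le> 1 * e^2" using e by (intro mult_right_mono) auto
        finally have "e^3 \<le> e^2" by simp
        moreover have "0 \<le> e^2" by simp
        ultimately show ?thesis by linarith
      qed
      ultimately show ?thesis by linarith
    qed
    ultimately have "\<bar>mu^3 - m^3\<bar> \<le> \<bar>m\<bar>^3 * (3*e)" by (simp add: mult_left_mono)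
    then show ?thesis by (simp add: algebra_simps)
  qed
  have eq: "m - T - m^3/3 = (mu - tanh mu - mu^3/3) + (m - mu) + (mu^3 - m^3)/3 + (tanh mu - T)"
    by (simp add: field_simps)
  have "\<bar>m - T - m^3/3\<bar> \<le> \<bar>mu - tanh mu - mu^3/3\<bar> + \<bar>m - mu\<bar> + \<bar>mu^3 - m^3\<bar>/3 + \<bar>tanh mu - T\<bar>"
    unfolding eq by (rule order_trans[OF abs_triangle_ineq] add_mono)+ (simp_all)
  also have "\<dots> \<le> 2/15 * \<bar>m\<bar>^5 + e * \<bar>m\<bar> + e * \<bar>m\<bar>^3 + 2*e^2"
    using c1 c2 c3 ta2 by (simp add: abs_minus_commute)
  finally show ?thesis unfolding T_def .
qed

lemma alg_G2:
  fixes n m a b :: real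
  shows "(n + n*m)/2 * ((1-a)/2 * ((n*m-2)^2 - (n*m)^2)) + (n - n*m)/2*((1+b)/2*((n*m+2)^2 - (n*m)^2))
    = 2*n*(1 - ((1+m)/2*a - (1-m)/2*b)) - 2*n^2*(m*(m - ((1+m)/2*a + (1-m)/2*b)))"
  by (simp add: field_simps power2_eq_square)

lemma alg_G4:
  fixes n m a b :: real
  shows "(n + n*m)/2 * ((1-a)/2 * ((n*m-2)^4 - (n*m)^4)) + (n - n*m)/2*((1+b)/2*((n*m+2)^4 - (n*m)^4))
    = -4*n^4*(m^3*(m - ((1+m)/2*a + (1-m)/2*b))) - 16*n^2*(m*(m - ((1+m)/2*a + (1-m)/2*b)))
      + 12*n^3*((1 - ((1+m)/2*a - (1-m)/2*b))*m^2) + 8*n*(1 - ((1+m)/2*a - (1-m)/2*b))"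
  by (simp add: field_simps power2_eq_square power3_eq_cube power4_eq_xxxx)

lemma G_closed:
  assumes s: "\<sigma> \<in> spins n" and n: "n \<ge> 1"
  shows "(\<Sum>i<n. cw_cond n \<sigma> i (- \<sigma> i) * ((Ssum n (\<sigma>(i := - \<sigma> i)))^k - (Ssum n \<sigma>)^k)) =
    (real n + Ssum n \<sigma>)/2 * ((1 - tanh (mg n \<sigma> - 1/real n))/2 * ((Ssum n \<sigma> - 2)^k - (Ssum n \<sigma>)^k))
  + (real n - Ssum n \<sigma>)/2 * ((1 + tanh (mg n \<sigma> + 1/real n))/2 * ((Ssum n \<sigma> + 2)^k - (Ssum n \<sigma>)^k))"
proof -
  define S where "S = Ssum n \<sigma>"
  define g where "g x = (1 - x * tanh ((S - x) / real n))/2 * ((S - 2*x)^k - S^k)" for x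
  have "(\<Sum>i<n. cw_cond n \<sigma> i (- \<sigma> i) * ((Ssum n (\<sigma>(i := - \<sigma> i)))^k - (Ssum n \<sigma>)^k)) = (\<Sum>i<n. g (\<sigma> i))"
  proof (rule sum.cong[OF refl])
    fix i assume i: "i \<in> {..<n}"
    have v: "- \<sigma> i \<in> {-1,1}" using spins_val[OF s] i by auto
    have c: "cw_cond n \<sigma> i (- \<sigma> i) = (1 + (- \<sigma> i) * tanh ((Ssum n \<sigma> - \<sigma> i) / real n)) / 2"
      using cond_closed[OF s _ v n] i by simp
    have u: "Ssum n (\<sigma>(i := - \<sigma> i)) = S - 2 * \<sigma> i" using Ssum_upd[of i n \<sigma> "- \<sigma> i"] i by (simp add: S_def)
    show "cw_cond n \<sigma> i (- \<sigma> i) * ((Ssum n (\<sigma>(i := - \<sigma> i)))^k - (Ssum n \<sigma>)^k) = g (\<sigma> i)"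
      unfolding c u g_def S_def by simp
  qed
  also have "\<dots> = (real n + S)/2 * g 1 + (real n - S)/2 * g (-1)" using sum_spin[OF s] by (simp add: S_def)
  also have "\<dots> = (real n + S)/2 * ((1 - tanh ((S - 1)/real n))/2 * ((S - 2)^k - S^k))
    + (real n - S)/2 * ((1 + tanh ((S - (-1))/real n))/2 * ((S + 2)^k - S^k))"
    unfolding g_def by simp
  finally show ?thesis using tanh_args[OF n, of \<sigma>] by (simp add: S_def)
qed

lemma stat_identity:
  assumes n: "n \<ge> 1"
  shows "Epi n (\<lambda>\<sigma>. (real n + Ssum n \<sigma>)/2 * ((1 - tanh (mg n \<sigma> - 1/real n))/2 * ((Ssum n \<sigma> - 2)^k - (Ssum n \<sigma>)^k))
  + (real n - Ssum n \<sigma>)/2 * ((1 + tanh (mg n \<sigma> + 1/real n))/2 * ((Ssum n \<sigma> + 2)^k - (Ssum n \<sigma>)^k))) = 0"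
proof -
  have "Epi n (\<lambda>\<sigma>. (real n + Ssum n \<sigma>)/2 * ((1 - tanh (mg n \<sigma> - 1/real n))/2 * ((Ssum n \<sigma> - 2)^k - (Ssum n \<sigma>)^k))
  + (real n - Ssum n \<sigma>)/2 * ((1 + tanh (mg n \<sigma> + 1/real n))/2 * ((Ssum n \<sigma> + 2)^k - (Ssum n \<sigma>)^k)))
    = Epi n (\<lambda>\<sigma>. \<Sum>i<n. cw_cond n \<sigma> i (- \<sigma> i) * ((Ssum n (\<sigma>(i := - \<sigma> i)))^k - (Ssum n \<sigma>)^k))"
    by (rule Epi_cong) (simp add: G_closed[OF _ n])
  also have "\<dots> = 0" unfolding Epi_def using stationary[of n "\<lambda>\<tau>. (Ssum n \<tau>)^k"] by simp
  finally show ?thesis .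
qed

lemma Epi_lin4: "Epi n (\<lambda>\<sigma>. a*f \<sigma> + b*g \<sigma> + c*h \<sigma> + d*k \<sigma>) = a*Epi n f + b*Epi n g + c*Epi n h + d*Epi n k"
  by (simp only: Epi_add Epi_cmult)

lemma Epi_lin2: "Epi n (\<lambda>\<sigma>. a*f \<sigma> + b*g \<sigma>) = a*Epi n f + b*Epi n g"
  by (simp only: Epi_add Epi_cmult)

definition F0 where "F0 n \<sigma> = 1 - Ug n \<sigma>"
definition F1 where "F1 n \<sigma> = mg n \<sigma> * (mg n \<sigma> - Tg n \<sigma>)"
definition F2 where "F2 n \<sigma> = (1 - Ug n \<sigma>) * mg n \<sigma> ^ 2"
definition F3 where "F3 n \<sigma> = mg n \<sigma> ^ 3 * (mg n \<sigma> - Tg n \<sigma>)"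

lemma Ssum_mg: "n \<ge> 1 \<Longrightarrow> Ssum n \<sigma> = real n * mg n \<sigma>"
  by (simp add: mg_def)

lemma I1:
  assumes n: "n \<ge> 1"
  shows "Epi n (F1 n) = Epi n (F0 n) / real n"
proof -
  have "Epi n (\<lambda>\<sigma>. (2 * real n) * F0 n \<sigma> + (- 2 * real n^2) * F1 n \<sigma>) = 0"
    unfolding stat_identity[OF n, of 2, symmetric]
  proof (rule Epi_cong)
    fix \<sigma> :: "nat \<Rightarrow> real"
    have S: "Ssum n \<sigma> = real n * mg n \<sigma>" using Ssum_mg[OF n] .
    show "2 * real n * F0 n \<sigma> + - 2 * (real n)\<^sup>2 * F1 n \<sigma> =
         (real n + Ssum n \<sigma>) / 2 * ((1 - tanh (mg n \<sigma> - 1 / real n)) / 2 * ((Ssum n \<sigma> - 2)\<^sup>2 - (Ssum n \<sigma>)\<^sup>2)) +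
         (real n - Ssum n \<sigma>) / 2 * ((1 + tanh (mg n \<sigma> + 1 / real n)) / 2 * ((Ssum n \<sigma> + 2)\<^sup>2 - (Ssum n \<sigma>)\<^sup>2))"
      unfolding S alg_G2 F0_def F1_def Tg_def Ug_def by simp
  qed
  then have "2 * real n * Epi n (F0 n) - 2 * real n^2 * Epi n (F1 n) = 0"
    unfolding Epi_lin2 by simp
  then show ?thesis using n by (simp add: field_simps power2_eq_square)
qed

lemma I2:
  assumes n: "n \<ge> 1"
  shows "Epi n (F3 n) = 3 * Epi n (F2 n) / real n - 2 * Epi n (F0 n) / real n^3"
proof -
  have "Epi n (\<lambda>\<sigma>. (-4 * real n^4) * F3 n \<sigma> + (-16 * real n^2) * F1 n \<sigma> + (12 * real n^3) * F2 n \<sigma> + (8 * real n) * F0 n \<sigma>) = 0"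
    unfolding stat_identity[OF n, of 4, symmetric]
  proof (rule Epi_cong)
    fix \<sigma> :: "nat \<Rightarrow> real"
    have S: "Ssum n \<sigma> = real n * mg n \<sigma>" using Ssum_mg[OF n] .
    show "- 4 * real n ^ 4 * F3 n \<sigma> + - 16 * (real n)\<^sup>2 * F1 n \<sigma> + 12 * real n ^ 3 * F2 n \<sigma> + 8 * real n * F0 n \<sigma> =
         (real n + Ssum n \<sigma>) / 2 * ((1 - tanh (mg n \<sigma> - 1 / real n)) / 2 * ((Ssum n \<sigma> - 2) ^ 4 - Ssum n \<sigma> ^ 4)) +
         (real n - Ssum n \<sigma>) / 2 * ((1 + tanh (mg n \<sigma> + 1 / real n)) / 2 * ((Ssum n \<sigma> + 2) ^ 4 - Ssum n \<sigma> ^ 4))"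
      unfolding S alg_G4 F0_def F1_def F2_def F3_def Tg_def Ug_def by simp
  qed
  then have "-4 * real n^4 * Epi n (F3 n) - 16 * real n^2 * Epi n (F1 n) + 12 * real n^3 * Epi n (F2 n) + 8 * real n * Epi n (F0 n) = 0"
    unfolding Epi_lin4 by simp
  then have "-4 * real n^4 * Epi n (F3 n) - 16 * real n * Epi n (F0 n) + 12 * real n^3 * Epi n (F2 n) + 8 * real n * Epi n (F0 n) = 0"
    unfolding I1[OF n] using n by (simp add: power2_eq_square)
  then have "real n * (4 * (3 * real n^2 * Epi n (F2 n) - 2 * Epi n (F0 n) - real n^3 * Epi n (F3 n))) = 0"
    by (simp add: algebra_simps eval_nat_numeral)
  then have "3 * real n^2 * Epi n (F2 n) - 2 * Epi n (F0 n) - real n^3 * Epi n (F3 n) = 0" using n by simp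
  then have "Epi n (F3 n) = (3 * real n^2 * Epi n (F2 n) - 2 * Epi n (F0 n)) / real n^3" using n by (simp add: field_simps)
  then show ?thesis using n by (simp add: field_simps eval_nat_numeral)
qed

lemma e_le1: "n \<ge> 1 \<Longrightarrow> 1 / real n \<le> 1" by simp

lemma F0_bounds:
  assumes "\<sigma> \<in> spins n" "n \<ge> 1"
  shows "0 \<le> F0 n \<sigma>" "F0 n \<sigma> \<le> 1 + 1/real n"
  using P2(1,2)[OF mg_abs[OF assms], of "1/real n"] unfolding F0_def Ug_def by auto

lemma F1_lower:
  assumes "\<sigma> \<in> spins n" "n \<ge> 1"
  shows "mg n \<sigma>^4/5 - 2*(1/real n)^2 \<le> F1 n \<sigma>"
  using P1[OF mg_abs[OF assms], of "1/real n"] assms(2) unfolding F1_def Tg_def by auto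

lemma M4:
  assumes n: "n \<ge> 1"
  shows "Epi n (\<lambda>\<sigma>. mg n \<sigma>^4) \<le> 5/real n + 15/real n^2"
proof -
  have "Epi n (\<lambda>\<sigma>. (1/5) * mg n \<sigma>^4 - 2*(1/real n)^2) \<le> Epi n (F1 n)"
    by (rule Epi_mono) (use F1_lower[OF _ n] in auto)
  then have a: "(1/5) * Epi n (\<lambda>\<sigma>. mg n \<sigma>^4) - 2*(1/real n)^2 \<le> Epi n (F1 n)"
    by (simp only: Epi_diff Epi_cmult Epi_const)
  have "Epi n (F0 n) \<le> Epi n (\<lambda>\<sigma>. 1 + 1/real n)"
    by (rule Epi_mono) (use F0_bounds[OF _ n] in auto)
  then have b: "Epi n (F0 n) \<le> 1 + 1/real n" by (simp only: Epi_const)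
  have c: "Epi n (F1 n) \<le> (1 + 1/real n) / real n" unfolding I1[OF n] using b n by (simp add: divide_right_mono)
  have gen: "(1/5)*x - q \<le> f \<Longrightarrow> f \<le> b \<Longrightarrow> x \<le> 5*(b + q)" for x f b q :: real by (simp add: field_simps)
  have "Epi n (\<lambda>\<sigma>. mg n \<sigma>^4) \<le> 5 * ((1 + 1/real n) / real n + 2*(1/real n)^2)" by (rule gen[OF a c])
  also have "\<dots> = 5/real n + 15/real n^2" using n by (simp add: field_simps power2_eq_square)
  finally show ?thesis .
qed

lemma M6:
  assumes n: "n \<ge> 1"
  shows "Epi n (\<lambda>\<sigma>. mg n \<sigma>^6) \<le> (15/real n + 25/real n^2) * Epi n (\<lambda>\<sigma>. mg n \<sigma>^2)"
proof -
  define E2 where "E2 = Epi n (\<lambda>\<sigma>. mg n \<sigma>^2)"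
  have F3l: "(1/5) * mg n \<sigma>^6 + (- 2*(1/real n)^2) * mg n \<sigma>^2 \<le> F3 n \<sigma>" if s: "\<sigma> \<in> spins n" for \<sigma>
  proof -
    have "mg n \<sigma>^2 * (mg n \<sigma>^4/5 - 2*(1/real n)^2) \<le> mg n \<sigma>^2 * F1 n \<sigma>"
      using F1_lower[OF s n] by (intro mult_left_mono) auto
    moreover have "F3 n \<sigma> = mg n \<sigma>^2 * F1 n \<sigma>" unfolding F3_def F1_def by (simp add: power2_eq_square power3_eq_cube)
    ultimately show ?thesis by (simp add: algebra_simps eval_nat_numeral)
  qed
  have "Epi n (\<lambda>\<sigma>. (1/5) * mg n \<sigma>^6 + (- 2*(1/real n)^2) * mg n \<sigma>^2) \<le> Epi n (F3 n)"
    by (rule Epi_mono) (use F3l in auto)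
  then have a: "(1/5) * Epi n (\<lambda>\<sigma>. mg n \<sigma>^6) + (- 2*(1/real n)^2) * E2 \<le> Epi n (F3 n)"
    unfolding E2_def by (simp only: Epi_lin2)
  have "Epi n (F2 n) \<le> Epi n (\<lambda>\<sigma>. (1 + 1/real n) * mg n \<sigma>^2)"
    by (rule Epi_mono) (use F0_bounds[OF _ n] in \<open>auto simp: F2_def F0_def intro: mult_right_mono\<close>)
  then have b: "Epi n (F2 n) \<le> (1 + 1/real n) * E2" unfolding E2_def by (simp only: Epi_cmult)
  have "Epi n (\<lambda>\<sigma>. 0) \<le> Epi n (F0 n)" by (rule Epi_mono) (use F0_bounds[OF _ n] in auto)
  then have b0: "0 \<le> Epi n (F0 n)" by (simp only: Epi_const)
  have "Epi n (F3 n) \<le> 3 * Epi n (F2 n) / real n"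
    unfolding I2[OF n] using b0 n by simp
  also have "\<dots> \<le> 3 * ((1 + 1/real n) * E2) / real n" using b n by (simp add: divide_right_mono)
  finally have c: "Epi n (F3 n) \<le> 3 * ((1 + 1/real n) * E2) / real n" .
  have "Epi n (\<lambda>\<sigma>. mg n \<sigma>^6) \<le> 5 * (3 * ((1 + 1/real n) * E2) / real n + 2*(1/real n)^2 * E2)"
  proof -
    have gen: "(1/5)*x + - q \<le> f \<Longrightarrow> f \<le> b \<Longrightarrow> x \<le> 5*(b + q)" for x f b q :: real by (simp add: field_simps)
    show ?thesis by (rule gen[OF _ c]) (use a in simp)
  qed
  also have "\<dots> = (15/real n + 25/real n^2) * E2" using n by (simp add: field_simps power2_eq_square)
  finally show ?thesis unfolding E2_def .
qed

lemma cpow: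
  assumes n: "n \<ge> 1"
  shows "(real n powr (1/4)) ^ k = real n powr (real k / 4)"
proof -
  have "(real n powr (1/4)) ^ k = (real n powr (1/4)) powr (real k)"
    using n by (simp add: powr_realpow)
  also have "\<dots> = real n powr (real k / 4)" by (simp add: powr_powr)
  finally show ?thesis .
qed

lemma cfacts:
  assumes n: "n \<ge> 1"
  defines "c \<equiv> real n powr (1/4)"
  shows "c > 0" "c \<ge> 1" "c^4 = real n" "real n powr (3/4) = c^3"
    "real n powr (-3/2) = 1 / c^6" "real n powr (-2) = 1 / c^8" "real n powr (-3/4) = 1 / c^3"
proof -
  show "c > 0" unfolding c_def using n by simp
  show "c \<ge> 1" unfolding c_def using n by (simp add: ge_one_powr_ge_zero)
  show "c^4 = real n" unfolding c_def cpow[OF n] using n by simp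
  show "real n powr (3/4) = c^3" unfolding c_def cpow[OF n] by simp
  have c6: "c^6 = real n powr (3/2)" unfolding c_def cpow[OF n] by simp
  have c8: "c^8 = real n powr 2" unfolding c_def cpow[OF n] by simp
  have c3: "c^3 = real n powr (3/4)" unfolding c_def cpow[OF n] by simp
  have m1: "real n powr (-3/2) = 1 / real n powr (3/2)" using powr_minus_divide[of "real n" "3/2"] by simp
  have m2: "real n powr (-2) = 1 / real n powr 2" using powr_minus_divide[of "real n" "2"] by simp
  have m3: "real n powr (-3/4) = 1 / real n powr (3/4)" using powr_minus_divide[of "real n" "3/4"] by simp
  show "real n powr (-3/2) = 1 / c^6" unfolding m1 c6 ..
  show "real n powr (-2) = 1 / c^8" unfolding m2 c8 ..
  show "real n powr (-3/4) = 1 / c^3" unfolding m3 c3 ..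
qed

lemma Wfun_mg:
  assumes n: "n \<ge> 1"
  shows "Wfun n \<sigma> = mg n \<sigma> * real n powr (1/4)"
proof -
  define c where "c = real n powr (1/4)"
  have c: "c > 0" "c^4 = real n" "real n powr (3/4) = c^3" using cfacts[OF n] unfolding c_def by auto
  have "Wfun n \<sigma> = real n * mg n \<sigma> / c^3" unfolding Wfun_Ssum Ssum_mg[OF n] c(3) ..
  also have "\<dots> = mg n \<sigma> * c" unfolding c(2)[symmetric] using c(1) by (simp add: field_simps eval_nat_numeral)
  finally show ?thesis unfolding c_def .
qed

lemma amgm2: "(w::real)^2 \<le> w^4/6 + 3/2"
proof -
  have "0 \<le> (w^2 - 3)^2" by simp
  then show ?thesis by (simp add: power2_eq_square power4_eq_xxxx algebra_simps)
qed

lemma amgm1: "\<bar>w::real\<bar> \<le> w^4/32 + 3/2"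
proof -
  define x where "x = \<bar>w\<bar>"
  have x: "x \<ge> 0" unfolding x_def by simp
  have w4: "w^4 = x^4" unfolding x_def by (simp add: power_even_abs)
  have "0 \<le> (x-2)^2 * (x^2 + 4*x + 12)" using x by (intro mult_nonneg_nonneg) auto
  then have "0 \<le> x^4 - 32*x + 48" by (simp add: power2_eq_square power4_eq_xxxx algebra_simps)
  then show ?thesis unfolding w4 x_def[symmetric] by simp
qed

lemma amgm3: "\<bar>w::real\<bar>^3 \<le> 3/8 * w^4 + 2"
proof -
  define x where "x = \<bar>w\<bar>"
  have x: "x \<ge> 0" unfolding x_def by simp
  have w4: "w^4 = x^4" unfolding x_def by (simp add: power_even_abs)
  have "0 \<le> (x-2)^2 * (3*x^2 + 4*x + 4)" using x by (intro mult_nonneg_nonneg) auto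
  then have "0 \<le> 3*x^4 - 8*x^3 + 16" by (simp add: power2_eq_square power3_eq_cube power4_eq_xxxx algebra_simps)
  then show ?thesis unfolding w4 x_def[symmetric] by simp
qed

lemma amgm5: "\<bar>w::real\<bar>^5 \<le> 5/12 * w^6 + 16/3"
proof -
  define x where "x = \<bar>w\<bar>"
  have x: "x \<ge> 0" unfolding x_def by simp
  have w6: "w^6 = x^6" unfolding x_def by (simp add: power_even_abs)
  have "0 \<le> (x-2)^2 * (5*x^4 + 8*x^3 + 12*x^2 + 16*x + 16)" using x by (intro mult_nonneg_nonneg) auto
  moreover have "(x-2)^2 * (5*x^4 + 8*x^3 + 12*x^2 + 16*x + 16) = 5*x^6 - 12*x^5 + 64" by algebra
  ultimately have "0 \<le> 5*x^6 - 12*x^5 + 64" by simp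
  then show ?thesis unfolding w6 x_def[symmetric] by simp
qed

lemma mg_pow_le1: "\<sigma> \<in> spins n \<Longrightarrow> n \<ge> 1 \<Longrightarrow> mg n \<sigma> ^ k \<le> 1"
proof -
  assume a: "\<sigma> \<in> spins n" "n \<ge> 1"
  have "\<bar>mg n \<sigma>\<bar> ^ k \<le> 1" using mg_abs[OF a] by (simp add: power_le_one)
  then show ?thesis by (metis abs_ge_self order_trans power_abs)
qed

lemma Wpow: "n \<ge> 1 \<Longrightarrow> Wfun n \<sigma> ^ k = (real n powr (1/4))^k * mg n \<sigma> ^ k"
  by (simp add: Wfun_mg power_mult_distrib)

lemma EW4:
  assumes n: "n \<ge> 1"
  shows "Epi n (\<lambda>\<sigma>. Wfun n \<sigma>^4) \<le> 8"
proof -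
  have c4: "(real n powr (1/4))^4 = real n" using cfacts(3)[OF n] .
  have e: "Epi n (\<lambda>\<sigma>. Wfun n \<sigma>^4) = real n * Epi n (\<lambda>\<sigma>. mg n \<sigma>^4)"
    unfolding Wpow[OF n] c4 Epi_cmult ..
  have b1: "real n * Epi n (\<lambda>\<sigma>. mg n \<sigma>^4) \<le> real n * (5/real n + 15/real n^2)"
    using M4[OF n] by (intro mult_left_mono) auto
  have "Epi n (\<lambda>\<sigma>. mg n \<sigma>^4) \<le> Epi n (\<lambda>\<sigma>. 1)" by (rule Epi_mono) (use mg_pow_le1 n in auto)
  then have b2: "real n * Epi n (\<lambda>\<sigma>. mg n \<sigma>^4) \<le> real n * 1" unfolding Epi_const by (intro mult_left_mono) auto
  show ?thesis
  proof (cases "n \<le> 8")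
    case True then show ?thesis using b2 e by simp
  next
    case False
    have "real n * (5/real n + 15/real n^2) = 5 + 15 / real n" using n by (simp add: field_simps power2_eq_square)
    also have "\<dots> \<le> 5 + 15 / 8"
    proof -
      have "15 / real n \<le> 15 / 8" using False by (intro divide_left_mono) auto
      then show ?thesis by simp
    qed
    finally have "real n * (5/real n + 15/real n^2) \<le> 5 + 15 / 8" .
    then show ?thesis using b1 e by linarith
  qed
qed

lemma EW2:
  assumes n: "n \<ge> 1"
  shows "Epi n (\<lambda>\<sigma>. Wfun n \<sigma>^2) \<le> 17/6"
proof -
  have "Epi n (\<lambda>\<sigma>. Wfun n \<sigma>^2) \<le> Epi n (\<lambda>\<sigma>. (1/6) * Wfun n \<sigma>^4 + 3/2)"
    by (rule Epi_mono) (use amgm2 in simp)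
  also have "\<dots> = (1/6) * Epi n (\<lambda>\<sigma>. Wfun n \<sigma>^4) + 3/2" by (simp only: Epi_add Epi_cmult Epi_const)
  finally show ?thesis using EW4[OF n] by simp
qed

lemma EW6:
  assumes n: "n \<ge> 1"
  shows "Epi n (\<lambda>\<sigma>. Wfun n \<sigma>^6) \<le> 60"
proof -
  define c where "c = real n powr (1/4)"
  have c: "c > 0" "c^4 = real n" using cfacts[OF n] unfolding c_def by auto
  show ?thesis
  proof (cases "n \<le> 15")
    case True
    have "(c^6)^2 = (c^4)^3" by (simp add: power_mult[symmetric])
    also have "\<dots> = real n ^ 3" using c by simp
    also have "\<dots> \<le> 15^3" using True by (intro power_mono) auto
    also have "\<dots> \<le> 60^2" by simp
    finally have "c^6 \<le> 60" by (rule power2_le_imp_le) simp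
    have "Epi n (\<lambda>\<sigma>. Wfun n \<sigma>^6) \<le> Epi n (\<lambda>\<sigma>. c^6)"
    proof (rule Epi_mono)
      fix \<sigma> assume s: "\<sigma> \<in> spins n"
      have "c^6 * mg n \<sigma>^6 \<le> c^6 * 1" using mg_pow_le1[OF s n] c by (intro mult_left_mono) auto
      then show "Wfun n \<sigma>^6 \<le> c^6" unfolding Wpow[OF n] c_def by simp
    qed
    then show ?thesis using \<open>c^6 \<le> 60\<close> unfolding Epi_const by simp
  next
    case False
    have e6: "Epi n (\<lambda>\<sigma>. Wfun n \<sigma>^6) = c^6 * Epi n (\<lambda>\<sigma>. mg n \<sigma>^6)"
      unfolding Wpow[OF n] c_def[symmetric] Epi_cmult ..
    have e2: "Epi n (\<lambda>\<sigma>. Wfun n \<sigma>^2) = c^2 * Epi n (\<lambda>\<sigma>. mg n \<sigma>^2)"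
      unfolding Wpow[OF n] c_def[symmetric] Epi_cmult ..
    have "c^6 * Epi n (\<lambda>\<sigma>. mg n \<sigma>^6) \<le> c^6 * ((15/real n + 25/real n^2) * Epi n (\<lambda>\<sigma>. mg n \<sigma>^2))"
      using M6[OF n] c by (intro mult_left_mono) auto
    also have "\<dots> = (15 + 25/real n) * (c^2 * Epi n (\<lambda>\<sigma>. mg n \<sigma>^2))"
    proof -
      have "c^6 = real n * c^2" using c by (simp add: power_add[symmetric] eval_nat_numeral mult.commute)
      then show ?thesis using n by (simp add: field_simps power2_eq_square)
    qed
    also have "\<dots> \<le> (15 + 25/16) * (17/6)"
    proof (rule mult_mono)
      have "25 / real n \<le> 25 / 16" using False by (intro divide_left_mono) auto
      then show "15 + 25 / real n \<le> 15 + 25 / 16" by simp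
      show "c^2 * Epi n (\<lambda>\<sigma>. mg n \<sigma>^2) \<le> 17/6" using EW2[OF n] e2 by simp
      show "0 \<le> 15 + (25::real) / 16" by simp
      have "Epi n (\<lambda>\<sigma>. 0) \<le> Epi n (\<lambda>\<sigma>. mg n \<sigma>^2)" by (rule Epi_mono) simp
      then show "0 \<le> c^2 * Epi n (\<lambda>\<sigma>. mg n \<sigma>^2)" unfolding Epi_const by simp
    qed
    also have "\<dots> \<le> 60" by simp
    finally show ?thesis using e6 by simp
  qed
qed

lemma pw1:
  fixes a c :: real assumes c: "c \<ge> 1" and a: "0 \<le> a" "a \<le> 1"
  shows "((2/15)*a^5 + (1/c^4)*a + (1/c^4)*a^3 + 2*(1/c^4)^2)/c^3 \<le> ((2/15)*(a*c)^5 + 2*(a*c) + 2)/c^8"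
proof -
  have cp: "c > 0" using c by simp
  have a3: "a^3 \<le> a"
  proof -
    have "a^3 = a * a^2" by (simp add: power2_eq_square power3_eq_cube)
    also have "\<dots> \<le> a * 1" using a by (intro mult_left_mono) (auto simp: power_le_one)
    finally show ?thesis by simp
  qed
  have L: "((2/15)*a^5 + (1/c^4)*a + (1/c^4)*a^3 + 2*(1/c^4)^2)/c^3 = (2/15)*a^5/c^3 + a/c^7 + a^3/c^7 + 2/c^11"
    using cp by (simp add: field_simps eval_nat_numeral)
  have R: "((2/15)*(a*c)^5 + 2*(a*c) + 2)/c^8 = (2/15)*a^5/c^3 + 2*a/c^7 + 2/c^8"
    using cp by (simp add: field_simps eval_nat_numeral)
  have t1: "a^3/c^7 \<le> a/c^7" using a3 cp by (simp add: divide_right_mono)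
  have "c^8 \<le> c^11" using c by (intro power_increasing) auto
  then have t2: "2/c^11 \<le> 2/c^8" using cp by (intro divide_left_mono) auto
  show ?thesis unfolding L R using t1 t2 by simp
qed

lemma pw2:
  fixes a c :: real assumes c: "c \<ge> 1"
  shows "2 * (a^2 + 1/c^4) / c^6 \<le> (2 * (a*c)^2 + 2) / c^8"
proof -
  have cp: "c > 0" using c by simp
  have L: "2 * (a^2 + 1/c^4) / c^6 = 2*a^2/c^6 + 2/c^10" using cp by (simp add: field_simps eval_nat_numeral)
  have R: "(2 * (a*c)^2 + 2) / c^8 = 2*a^2/c^6 + 2/c^8" using cp by (simp add: field_simps eval_nat_numeral)
  have "c^8 \<le> c^10" using c by (intro power_increasing) auto
  then have t2: "2/c^10 \<le> 2/c^8" using cp by (intro divide_left_mono) auto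
  show ?thesis unfolding L R using t2 by simp
qed

lemma finite_omega: "finite (omega n)"
  unfolding omega_def using finite_spins by simp

lemma pr_nonneg: "n \<ge> 1 \<Longrightarrow> pr n \<omega> \<ge> 0"
  unfolding pr_def using cw_prob_pos cw_cond_pos
  by (auto split: prod.splits intro!: mult_nonneg_nonneg less_imp_le)

lemma condE_reduce:
  assumes n: "n \<ge> 1" and om: "\<omega> \<in> omega n"
  shows "condE_W n Y \<omega> - h (W n \<omega>) =
    condE_W n (\<lambda>\<eta>. (1 / real n) * (\<Sum>i<n. \<Sum>s\<in>{-1,1}. cw_cond n (fst \<eta>) i s * Y (fst \<eta>, i, s)) - h (W n \<eta>)) \<omega>"
proof -
  define w where "w = W n \<omega>"
  define B where "B = {\<sigma>\<in>spins n. Wfun n \<sigma> = w}"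
  define A where "A \<sigma> = (1 / real n) * (\<Sum>i<n. \<Sum>s\<in>{-1,1}. cw_cond n \<sigma> i s * Y (\<sigma>, i, s))" for \<sigma>
  have cl: "{\<eta>\<in>omega n. W n \<eta> = W n \<omega>} = B \<times> ({..<n} \<times> {-1,1})"
    unfolding omega_def W_def B_def w_def by auto
  have N1: "(\<Sum>\<eta>\<in>{\<eta>\<in>omega n. W n \<eta> = W n \<omega>}. pr n \<eta> * Y \<eta>) = (\<Sum>\<sigma>\<in>B. cw_prob n \<sigma> * A \<sigma>)"
    unfolding cl sum_prod_reduce A_def ..
  have D: "(\<Sum>\<eta>\<in>{\<eta>\<in>omega n. W n \<eta> = W n \<omega>}. pr n \<eta>) = (\<Sum>\<sigma>\<in>B. cw_prob n \<sigma>)"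
  proof -
    have "(\<Sum>\<eta>\<in>{\<eta>\<in>omega n. W n \<eta> = W n \<omega>}. pr n \<eta>) = (\<Sum>\<eta>\<in>B \<times> ({..<n} \<times> {-1,1}). pr n \<eta> * 1)"
      unfolding cl by simp
    also have "\<dots> = (\<Sum>\<sigma>\<in>B. cw_prob n \<sigma> * ((1 / real n) * (\<Sum>i<n. \<Sum>s\<in>{-1,1}. cw_cond n \<sigma> i s * 1)))"
      by (rule sum_prod_reduce)
    also have "\<dots> = (\<Sum>\<sigma>\<in>B. cw_prob n \<sigma>)"
      by (rule sum.cong[OF refl]) (subst avg_const[OF n], simp)
    finally show ?thesis .
  qed
  have N2: "(\<Sum>\<eta>\<in>{\<eta>\<in>omega n. W n \<eta> = W n \<omega>}. pr n \<eta> * (A (fst \<eta>) - h (W n \<eta>)))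
        = (\<Sum>\<sigma>\<in>B. cw_prob n \<sigma> * (A \<sigma> - h w))"
  proof -
    have "(\<Sum>\<eta>\<in>{\<eta>\<in>omega n. W n \<eta> = W n \<omega>}. pr n \<eta> * (A (fst \<eta>) - h (W n \<eta>)))
      = (\<Sum>\<sigma>\<in>B. cw_prob n \<sigma> * ((1 / real n) * (\<Sum>i<n. \<Sum>s\<in>{-1,1}. cw_cond n \<sigma> i s * (A (fst (\<sigma>, i, s)) - h (W n (\<sigma>, i, s))))))"
      unfolding cl by (rule sum_prod_reduce)
    also have "\<dots> = (\<Sum>\<sigma>\<in>B. cw_prob n \<sigma> * (A \<sigma> - h w))"
    proof (rule sum.cong[OF refl])
      fix \<sigma> assume "\<sigma> \<in> B"
      then have "W n (\<sigma>, i, s) = w" for i s unfolding B_def W_def by simp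
      then show "cw_prob n \<sigma> * ((1 / real n) * (\<Sum>i<n. \<Sum>s\<in>{-1,1}. cw_cond n \<sigma> i s * (A (fst (\<sigma>, i, s)) - h (W n (\<sigma>, i, s))))) =
          cw_prob n \<sigma> * (A \<sigma> - h w)" using avg_const[OF n, of \<sigma> "A \<sigma> - h w"] by simp
    qed
    finally show ?thesis .
  qed
  have finB: "finite B" unfolding B_def using finite_spins by simp
  have fB: "fst \<omega> \<in> B" using om unfolding B_def w_def W_def omega_def by auto
  have Dpos: "(\<Sum>\<sigma>\<in>B. cw_prob n \<sigma>) > 0"
  proof -
    have "cw_prob n (fst \<omega>) \<le> (\<Sum>\<sigma>\<in>B. cw_prob n \<sigma>)"
      using finB fB cw_prob_pos by (intro member_le_sum) (auto intro: less_imp_le)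
    then show ?thesis using cw_prob_pos[of n "fst \<omega>"] by linarith
  qed
  have N2': "(\<Sum>\<sigma>\<in>B. cw_prob n \<sigma> * (A \<sigma> - h w)) = (\<Sum>\<sigma>\<in>B. cw_prob n \<sigma> * A \<sigma>) - h w * (\<Sum>\<sigma>\<in>B. cw_prob n \<sigma>)"
    by (simp add: right_diff_distrib sum_subtractf sum_distrib_left mult.commute)
  have G: "(\<lambda>\<eta>. (1 / real n) * (\<Sum>i<n. \<Sum>s\<in>{-1,1}. cw_cond n (fst \<eta>) i s * Y (fst \<eta>, i, s)) - h (W n \<eta>))
      = (\<lambda>\<eta>. A (fst \<eta>) - h (W n \<eta>))" by (simp add: A_def)
  have "condE_W n (\<lambda>\<eta>. A (fst \<eta>) - h (W n \<eta>)) \<omega> =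
     ((\<Sum>\<sigma>\<in>B. cw_prob n \<sigma> * A \<sigma>) - h w * (\<Sum>\<sigma>\<in>B. cw_prob n \<sigma>)) / (\<Sum>\<sigma>\<in>B. cw_prob n \<sigma>)"
    unfolding condE_W_def N2 N2' D ..
  also have "\<dots> = (\<Sum>\<sigma>\<in>B. cw_prob n \<sigma> * A \<sigma>) / (\<Sum>\<sigma>\<in>B. cw_prob n \<sigma>) - h w"
    using Dpos by (simp add: field_simps)
  also have "\<dots> = condE_W n Y \<omega> - h (W n \<omega>)"
    unfolding condE_W_def N1 D w_def ..
  finally show ?thesis unfolding G by simp

qed

lemma condE_step:
  assumes n: "n \<ge> 1"
  shows "Ex n (\<lambda>\<omega>. \<bar>condE_W n Y \<omega> - h (W n \<omega>)\<bar>) \<le>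
    Epi n (\<lambda>\<sigma>. \<bar>(1 / real n) * (\<Sum>i<n. \<Sum>s\<in>{-1,1}. cw_cond n \<sigma> i s * Y (\<sigma>, i, s)) - h (Wfun n \<sigma>)\<bar>)"
proof -
  define G where "G \<eta> = (1 / real n) * (\<Sum>i<n. \<Sum>s\<in>{-1,1}. cw_cond n (fst \<eta>) i s * Y (fst \<eta>, i, s)) - h (W n \<eta>)" for \<eta>
  have "Ex n (\<lambda>\<omega>. \<bar>condE_W n Y \<omega> - h (W n \<omega>)\<bar>) = Ex n (\<lambda>\<omega>. \<bar>condE_W n G \<omega>\<bar>)"
    unfolding Ex_def G_def by (rule sum.cong[OF refl]) (simp add: condE_reduce[OF n])
  also have "\<dots> \<le> Ex n (\<lambda>\<omega>. \<bar>G \<omega>\<bar>)"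
    unfolding Ex_def condE_W_def by (rule condE_jensen[OF finite_omega pr_nonneg[OF n]])
  also have "\<dots> = Ex n (\<lambda>\<omega>. (\<lambda>\<sigma>. \<bar>(1 / real n) * (\<Sum>i<n. \<Sum>s\<in>{-1,1}. cw_cond n \<sigma> i s * Y (\<sigma>, i, s)) - h (Wfun n \<sigma>)\<bar>) (fst \<omega>))"
    unfolding G_def W_def by simp
  also have "\<dots> = Epi n (\<lambda>\<sigma>. \<bar>(1 / real n) * (\<Sum>i<n. \<Sum>s\<in>{-1,1}. cw_cond n \<sigma> i s * Y (\<sigma>, i, s)) - h (Wfun n \<sigma>)\<bar>)"
    by (rule Ex_fst[OF n])
  finally show ?thesis .
qed

lemma EabsW5: "n \<ge> 1 \<Longrightarrow> Epi n (\<lambda>\<sigma>. \<bar>Wfun n \<sigma>\<bar>^5) \<le> 91/3"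
proof -
  assume n: "n \<ge> 1"
  have "Epi n (\<lambda>\<sigma>. \<bar>Wfun n \<sigma>\<bar>^5) \<le> Epi n (\<lambda>\<sigma>. (5/12) * Wfun n \<sigma>^6 + 16/3)"
    by (rule Epi_mono) (use amgm5 in simp)
  also have "\<dots> = (5/12) * Epi n (\<lambda>\<sigma>. Wfun n \<sigma>^6) + 16/3" by (simp only: Epi_add Epi_cmult Epi_const)
  finally show ?thesis using EW6[OF n] by simp
qed

lemma EabsW1: "n \<ge> 1 \<Longrightarrow> Epi n (\<lambda>\<sigma>. \<bar>Wfun n \<sigma>\<bar>) \<le> 7/4"
proof -
  assume n: "n \<ge> 1"
  have "Epi n (\<lambda>\<sigma>. \<bar>Wfun n \<sigma>\<bar>) \<le> Epi n (\<lambda>\<sigma>. (1/32) * Wfun n \<sigma>^4 + 3/2)"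
    by (rule Epi_mono) (use amgm1 in simp)
  also have "\<dots> = (1/32) * Epi n (\<lambda>\<sigma>. Wfun n \<sigma>^4) + 3/2" by (simp only: Epi_add Epi_cmult Epi_const)
  finally show ?thesis using EW4[OF n] by simp
qed

lemma EabsW3: "n \<ge> 1 \<Longrightarrow> Epi n (\<lambda>\<sigma>. \<bar>Wfun n \<sigma>\<bar>^3) \<le> 5"
proof -
  assume n: "n \<ge> 1"
  have "Epi n (\<lambda>\<sigma>. \<bar>Wfun n \<sigma>\<bar>^3) \<le> Epi n (\<lambda>\<sigma>. (3/8) * Wfun n \<sigma>^4 + 2)"
    by (rule Epi_mono) (use amgm3 in simp)
  also have "\<dots> = (3/8) * Epi n (\<lambda>\<sigma>. Wfun n \<sigma>^4) + 2" by (simp only: Epi_add Epi_cmult Epi_const)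
  finally show ?thesis using EW4[OF n] by simp
qed

lemma claim1:
  assumes n: "n \<ge> 1"
  shows "Ex n (\<lambda>\<omega>. \<bar>condE_W n (\<lambda>\<eta>. W n \<eta> - W' n \<eta>) \<omega>
              - real n powr (-3/2) / 3 * (W n \<omega>) ^ 3\<bar>) \<le> 15 * real n powr (-2)"
proof -
  define c where "c = real n powr (1/4)"
  have c: "c > 0" "c \<ge> 1" "c^4 = real n" "real n powr (3/4) = c^3"
    "real n powr (-3/2) = 1 / c^6" "real n powr (-2) = 1 / c^8"
    using cfacts[OF n] unfolding c_def by auto
  have step: "Ex n (\<lambda>\<omega>. \<bar>condE_W n (\<lambda>\<eta>. W n \<eta> - W' n \<eta>) \<omega> - real n powr (-3/2) / 3 * (W n \<omega>) ^ 3\<bar>) \<le>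
    Epi n (\<lambda>\<sigma>. \<bar>(1 / real n) * (\<Sum>i<n. \<Sum>s\<in>{-1,1}. cw_cond n \<sigma> i s * (W n (\<sigma>, i, s) - W' n (\<sigma>, i, s)))
       - real n powr (-3/2) / 3 * (Wfun n \<sigma>) ^ 3\<bar>)"
    using condE_step[OF n, of "\<lambda>\<eta>. W n \<eta> - W' n \<eta>" "\<lambda>w. real n powr (-3/2) / 3 * w ^ 3"] by simp
  have pw: "\<bar>(1 / real n) * (\<Sum>i<n. \<Sum>s\<in>{-1,1}. cw_cond n \<sigma> i s * (W n (\<sigma>, i, s) - W' n (\<sigma>, i, s)))
       - real n powr (-3/2) / 3 * (Wfun n \<sigma>) ^ 3\<bar> \<le> (2/15/c^8) * \<bar>Wfun n \<sigma>\<bar>^5 + (2/c^8) * \<bar>Wfun n \<sigma>\<bar> + 2/c^8"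
    if s: "\<sigma> \<in> spins n" for \<sigma>
  proof -
    define m where "m = mg n \<sigma>"
    have m1: "\<bar>m\<bar> \<le> 1" unfolding m_def using mg_abs[OF s n] .
    have W: "Wfun n \<sigma> = m * c" unfolding m_def c_def using Wfun_mg[OF n] .
    have e: "1 / real n = 1 / c^4" using c by simp
    have "(1 / real n) * (\<Sum>i<n. \<Sum>s\<in>{-1,1}. cw_cond n \<sigma> i s * (W n (\<sigma>, i, s) - W' n (\<sigma>, i, s)))
       - real n powr (-3/2) / 3 * (Wfun n \<sigma>) ^ 3 = (m - Tg n \<sigma>) / c^3 - (1/c^6)/3 * (m*c)^3"
      unfolding A1_closed[OF s n] c(4) c(5) W m_def ..
    also have "\<dots> = (m - Tg n \<sigma> - m^3/3) / c^3" using c(1) by (simp add: field_simps eval_nat_numeral)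
    finally have eq: "\<bar>(1 / real n) * (\<Sum>i<n. \<Sum>s\<in>{-1,1}. cw_cond n \<sigma> i s * (W n (\<sigma>, i, s) - W' n (\<sigma>, i, s)))
       - real n powr (-3/2) / 3 * (Wfun n \<sigma>) ^ 3\<bar> = \<bar>m - Tg n \<sigma> - m^3/3\<bar> / c^3" using c(1) by (simp add: abs_divide)
    have p3: "\<bar>m - Tg n \<sigma> - m^3/3\<bar> \<le> 2/15 * \<bar>m\<bar>^5 + (1/c^4) * \<bar>m\<bar> + (1/c^4) * \<bar>m\<bar>^3 + 2*(1/c^4)^2"
    proof -
      have ee: "0 \<le> 1/real n" "1/real n \<le> 1" using n by auto
      show ?thesis using P3[OF m1 ee] unfolding Tg_def m_def[symmetric] e .
    qed
    have "\<bar>m - Tg n \<sigma> - m^3/3\<bar> / c^3 \<le> (2/15 * \<bar>m\<bar>^5 + (1/c^4) * \<bar>m\<bar> + (1/c^4) * \<bar>m\<bar>^3 + 2*(1/c^4)^2) / c^3"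
      using p3 c(1) by (simp add: divide_right_mono)
    also have "\<dots> \<le> ((2/15)*(\<bar>m\<bar>*c)^5 + 2*(\<bar>m\<bar>*c) + 2)/c^8" using pw1[OF c(2), of "\<bar>m\<bar>"] m1 by simp
    also have "\<dots> = (2/15/c^8) * \<bar>Wfun n \<sigma>\<bar>^5 + (2/c^8) * \<bar>Wfun n \<sigma>\<bar> + 2/c^8"
      unfolding W using c(1) by (simp add: abs_mult field_simps)
    finally show ?thesis unfolding eq .
  qed
  have "Epi n (\<lambda>\<sigma>. \<bar>(1 / real n) * (\<Sum>i<n. \<Sum>s\<in>{-1,1}. cw_cond n \<sigma> i s * (W n (\<sigma>, i, s) - W' n (\<sigma>, i, s)))
       - real n powr (-3/2) / 3 * (Wfun n \<sigma>) ^ 3\<bar>) \<le> Epi n (\<lambda>\<sigma>. (2/15/c^8) * \<bar>Wfun n \<sigma>\<bar>^5 + (2/c^8) * \<bar>Wfun n \<sigma>\<bar> + 2/c^8)"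
    by (rule Epi_mono) (rule pw)
  also have "\<dots> = (2/15/c^8) * Epi n (\<lambda>\<sigma>. \<bar>Wfun n \<sigma>\<bar>^5) + (2/c^8) * Epi n (\<lambda>\<sigma>. \<bar>Wfun n \<sigma>\<bar>) + 2/c^8"
    by (simp only: Epi_add Epi_cmult Epi_const)
  also have "\<dots> \<le> (2/15/c^8) * (91/3) + (2/c^8) * (7/4) + 2/c^8"
    using EabsW5[OF n] EabsW1[OF n] c(1) by (intro add_mono mult_left_mono) auto
  also have "\<dots> \<le> 15 * (1/c^8)" using c(1) by (simp add: field_simps)
  finally show ?thesis using step c(6) by simp
qed

lemma claim2:
  assumes n: "n \<ge> 1"
  shows "Ex n (\<lambda>\<omega>. \<bar>condE_W n (\<lambda>\<eta>. (W n \<eta> - W' n \<eta>)^2) \<omega>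
              - 2 * real n powr (-3/2)\<bar>) \<le> 15 * real n powr (-2)"
proof -
  define c where "c = real n powr (1/4)"
  have c: "c > 0" "c \<ge> 1" "c^4 = real n" "real n powr (3/4) = c^3"
    "real n powr (-3/2) = 1 / c^6" "real n powr (-2) = 1 / c^8"
    using cfacts[OF n] unfolding c_def by auto
  have step: "Ex n (\<lambda>\<omega>. \<bar>condE_W n (\<lambda>\<eta>. (W n \<eta> - W' n \<eta>)^2) \<omega> - 2 * real n powr (-3/2)\<bar>) \<le>
    Epi n (\<lambda>\<sigma>. \<bar>(1 / real n) * (\<Sum>i<n. \<Sum>s\<in>{-1,1}. cw_cond n \<sigma> i s * (W n (\<sigma>, i, s) - W' n (\<sigma>, i, s))^2)
       - 2 * real n powr (-3/2)\<bar>)"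
    using condE_step[OF n, of "\<lambda>\<eta>. (W n \<eta> - W' n \<eta>)^2" "\<lambda>w. 2 * real n powr (-3/2)"] by simp
  have pw: "\<bar>(1 / real n) * (\<Sum>i<n. \<Sum>s\<in>{-1,1}. cw_cond n \<sigma> i s * (W n (\<sigma>, i, s) - W' n (\<sigma>, i, s))^2)
       - 2 * real n powr (-3/2)\<bar> \<le> (2/c^8) * Wfun n \<sigma>^2 + 2/c^8"
    if s: "\<sigma> \<in> spins n" for \<sigma>
  proof -
    define m where "m = mg n \<sigma>"
    have m1: "\<bar>m\<bar> \<le> 1" unfolding m_def using mg_abs[OF s n] .
    have W: "Wfun n \<sigma> = m * c" unfolding m_def c_def using Wfun_mg[OF n] .
    have e: "1 / real n = 1 / c^4" using c by simp
    have "(1 / real n) * (\<Sum>i<n. \<Sum>s\<in>{-1,1}. cw_cond n \<sigma> i s * (W n (\<sigma>, i, s) - W' n (\<sigma>, i, s))^2)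
       - 2 * real n powr (-3/2) = 2 * (1 - Ug n \<sigma>) / (c^3)^2 - 2 * (1/c^6)"
      unfolding A2_closed[OF s n] c(4) c(5) ..
    also have "\<dots> = - 2 * Ug n \<sigma> / c^6" using c(1) by (simp add: field_simps power_mult[symmetric])
    finally have eq: "\<bar>(1 / real n) * (\<Sum>i<n. \<Sum>s\<in>{-1,1}. cw_cond n \<sigma> i s * (W n (\<sigma>, i, s) - W' n (\<sigma>, i, s))^2)
       - 2 * real n powr (-3/2)\<bar> = 2 * \<bar>Ug n \<sigma>\<bar> / c^6" using c(1) by (simp add: abs_divide abs_mult)
    have ee: "0 \<le> 1/real n" using n by auto
    have p2: "\<bar>Ug n \<sigma>\<bar> \<le> m^2 + 1/c^4"
      using P2(3)[OF m1 ee] unfolding Ug_def m_def[symmetric] e .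
    have "2 * \<bar>Ug n \<sigma>\<bar> / c^6 \<le> 2 * (m^2 + 1/c^4) / c^6"
      using p2 c(1) by (simp add: divide_right_mono)
    also have "\<dots> \<le> (2 * (m*c)^2 + 2) / c^8" by (rule pw2[OF c(2)])
    also have "\<dots> = (2/c^8) * Wfun n \<sigma>^2 + 2/c^8" unfolding W using c(1) by (simp add: field_simps)
    finally show ?thesis unfolding eq .
  qed
  have "Epi n (\<lambda>\<sigma>. \<bar>(1 / real n) * (\<Sum>i<n. \<Sum>s\<in>{-1,1}. cw_cond n \<sigma> i s * (W n (\<sigma>, i, s) - W' n (\<sigma>, i, s))^2)
       - 2 * real n powr (-3/2)\<bar>) \<le> Epi n (\<lambda>\<sigma>. (2/c^8) * Wfun n \<sigma>^2 + 2/c^8)"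
    by (rule Epi_mono) (rule pw)
  also have "\<dots> = (2/c^8) * Epi n (\<lambda>\<sigma>. Wfun n \<sigma>^2) + 2/c^8"
    by (simp only: Epi_add Epi_cmult Epi_const)
  also have "\<dots> \<le> (2/c^8) * (17/6) + 2/c^8"
    using EW2[OF n] c(1) by (intro add_mono mult_left_mono) auto
  also have "\<dots> \<le> 15 * (1/c^8)" using c(1) by (simp add: field_simps)
  finally show ?thesis using step c(6) by simp
qed

lemma claim3:
  assumes n: "n \<ge> 1"
  shows "Ex n (\<lambda>\<omega>. \<bar>W n \<omega>\<bar> ^ 3) \<le> 15"
proof -
  have "Ex n (\<lambda>\<omega>. \<bar>W n \<omega>\<bar> ^ 3) = Ex n (\<lambda>\<omega>. (\<lambda>\<sigma>. \<bar>Wfun n \<sigma>\<bar> ^ 3) (fst \<omega>))"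
    unfolding W_def ..
  also have "\<dots> = Epi n (\<lambda>\<sigma>. \<bar>Wfun n \<sigma>\<bar> ^ 3)" by (rule Ex_fst[OF n])
  finally show ?thesis using EabsW3[OF n] by simp
qed

lemma claim4:
  assumes n: "n \<ge> 1"
  shows "\<forall>\<omega>\<in>omega n. \<bar>W n \<omega> - W' n \<omega>\<bar> \<le> 2 * real n powr (-3/4)"
proof
  fix \<omega> assume "\<omega> \<in> omega n"
  then obtain \<sigma> i s where om: "\<omega> = (\<sigma>, i, s)" "\<sigma> \<in> spins n" "i < n" "s \<in> {-1,1}"
    unfolding omega_def by auto
  define P where "P = real n powr (3/4)"
  have Pp: "P > 0" unfolding P_def using n by simp
  have "W n \<omega> - W' n \<omega> = Ssum n \<sigma> / P - Ssum n (\<sigma>(i:=s)) / P"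
    unfolding om by (simp add: W_def W'_def sigma'_def Wfun_Ssum P_def)
  also have "\<dots> = (\<sigma> i - s) / P" using om(3) Ssum_upd[of i n \<sigma> s]
    by (simp add: diff_divide_distrib[symmetric])
  finally have d: "\<bar>W n \<omega> - W' n \<omega>\<bar> = \<bar>\<sigma> i - s\<bar> / P" using Pp by (simp add: abs_divide)
  have "\<bar>\<sigma> i - s\<bar> \<le> 2" using spins_val[OF om(2,3)] om(4) by auto
  then have "\<bar>\<sigma> i - s\<bar> / P \<le> 2 / P" using Pp by (simp add: divide_right_mono)
  also have "2 / P = 2 * real n powr (-3/4)" unfolding P_def by (simp add: powr_minus_divide)
  finally show "\<bar>W n \<omega> - W' n \<omega>\<bar> \<le> 2 * real n powr (-3/4)" unfolding d .
qed

theorem lemma5p1: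
  fixes n :: nat
  assumes "n \<ge> 1"
  shows "Ex n (\<lambda>\<omega>. \<bar>condE_W n (\<lambda>\<eta>. W n \<eta> - W' n \<eta>) \<omega>
              - real n powr (-3/2) / 3 * (W n \<omega>) ^ 3\<bar>) \<le> 15 * real n powr (-2) \<and>
         Ex n (\<lambda>\<omega>. \<bar>condE_W n (\<lambda>\<eta>. (W n \<eta> - W' n \<eta>)^2) \<omega>
              - 2 * real n powr (-3/2)\<bar>) \<le> 15 * real n powr (-2) \<and>
         Ex n (\<lambda>\<omega>. \<bar>W n \<omega>\<bar> ^ 3) \<le> 15 \<and>
         (\<forall>\<omega>\<in>omega n. \<bar>W n \<omega> - W' n \<omega>\<bar> \<le> 2 * real n powr (-3/4))"
  using claim1[OF assms] claim2[OF assms] claim3[OF assms] claim4[OF assms] by blast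

end
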